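(* $\frac{\partial^2}{\partial y\,\partial x}\zeta(3,z)\ge 0$ for all $z=x+iy$ with $x\in[0,\frac12]$ and $y\in[\frac{\sqrt3}{2},\infty)$.
   Context: For $s>1$ and $z=x+iy$ with $y>0$, $\zeta(s,z)=\sum_{(m,n)\in\mathbb{Z}^2\setminus\{0\}}\frac{y^s}{|mz+n|^{2s}}$. *)

theory Defs
  imports "HOL-Analysis.Analysis"
begin

definition epstein_zeta :: "real \<Rightarrow> complex \<Rightarrow> real" where
  "epstein_zeta s z =
     infsum (\<lambda>(m::int, n::int). (Im z) powr s / (cmod (of_int m * z + of_int n)) powr (2 * s))
            (UNIV - {(0, 0)})"

end

theory Submission
  imports Defs
begin

lemma cot_Digamma:
  fixes z :: complex
  assumes z: "z \<notin> \<int>"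
  shows "of_real pi * cot (of_real pi * z) = Digamma (1 - z) - Digamma z"
proof -
  have z1: "z \<notin> \<int>\<^sub>\<le>\<^sub>0" using z nonpos_Ints_subset_Ints by blast
  have z2: "1 - z \<notin> \<int>\<^sub>\<le>\<^sub>0"
  proof
    assume "1 - z \<in> \<int>\<^sub>\<le>\<^sub>0"
    then have "1 - z \<in> \<int>" using nonpos_Ints_subset_Ints by blast
    then have "1 - (1 - z) \<in> \<int>" by (intro Ints_diff) auto
    then show False using z by simp
  qed
  have s: "sin (of_real pi * z) \<noteq> 0"
  proof
    assume "sin (of_real pi * z) = 0"
    then obtain n :: int where "of_real pi * z = of_int n * of_real pi"
      by (auto simp: sin_eq_0)
    then have "z = of_int n" by (simp add: field_simps)
    then show False using z by simp
  qed
  have feq: "(\<lambda>z::complex. Gamma z * Gamma (1 - z)) = (\<lambda>z::complex. of_real pi / sin (of_real pi * z))"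
    using Gamma_reflection_complex by auto
  have d1: "((\<lambda>z. Gamma z * Gamma (1 - z)) has_field_derivative
      (Gamma z * Digamma z * Gamma (1 - z) - Gamma z * (Gamma (1 - z) * Digamma (1 - z)))) (at z)"
    using z1 z2 by (auto intro!: derivative_eq_intros)
  have d2: "((\<lambda>z. of_real pi / sin (of_real pi * z)) has_field_derivative
      (- (of_real pi * (cos (of_real pi * z) * of_real pi)) / (sin (of_real pi * z))\<^sup>2)) (at z)"
    using s by (auto intro!: derivative_eq_intros simp: power2_eq_square)
  from d1 have d1': "((\<lambda>z. of_real pi / sin (of_real pi * z)) has_field_derivative
      (Gamma z * Digamma z * Gamma (1 - z) - Gamma z * (Gamma (1 - z) * Digamma (1 - z)))) (at z)"
    by (simp add: feq)
  have eq: "Gamma z * Digamma z * Gamma (1 - z) - Gamma z * (Gamma (1 - z) * Digamma (1 - z))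
      = - (of_real pi * (cos (of_real pi * z) * of_real pi)) / (sin (of_real pi * z))\<^sup>2"
    using DERIV_unique[OF d1' d2] .
  have G: "Gamma z * Gamma (1 - z) = of_real pi / sin (of_real pi * z)"
    by (rule Gamma_reflection_complex)
  have "Gamma z * Gamma (1 - z) * (Digamma z - Digamma (1 - z))
      = - (of_real pi * (cos (of_real pi * z) * of_real pi)) / (sin (of_real pi * z))\<^sup>2"
    using eq by (simp add: algebra_simps)
  then have "of_real pi / sin (of_real pi * z) * (Digamma z - Digamma (1 - z))
      = of_real pi / sin (of_real pi * z) * (- (of_real pi * cot (of_real pi * z)))"
    using s by (simp add: G cot_def power2_eq_square field_simps)
  have "Digamma z - Digamma (1 - z) = - (of_real pi * cot (of_real pi * z))"
  proof -
    have "of_real pi / sin (of_real pi * z) \<noteq> (0::complex)" using s by simp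
    then show ?thesis using \<open>of_real pi / sin (of_real pi * z) * (Digamma z - Digamma (1 - z))
      = of_real pi / sin (of_real pi * z) * (- (of_real pi * cot (of_real pi * z)))\<close>
      by (metis mult_left_cancel)
  qed
  then show ?thesis by (simp add: algebra_simps)
qed

lemma cot_sums:
  fixes w :: complex
  assumes "w \<notin> \<int>"
  shows "(\<lambda>k. inverse (w + of_nat k) - inverse (1 - w + of_nat k)) sums (of_real pi * cot (of_real pi * w))"
proof -
  have w0: "w \<noteq> 0" using assms by auto
  have w1: "1 - w \<noteq> 0" using assms by auto
  have s1: "(\<lambda>k. inverse (of_nat (Suc k)) - inverse (w + of_nat k)) sums (Digamma w + euler_mascheroni)"
    using summable_Digamma[OF w0] by (simp add: Digamma_def summable_sums)
  have s2: "(\<lambda>k. inverse (of_nat (Suc k)) - inverse ((1 - w) + of_nat k)) sums (Digamma (1 - w) + euler_mascheroni)"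
    using summable_Digamma[OF w1] by (simp add: Digamma_def summable_sums)
  from sums_diff[OF s2 s1] show ?thesis
    by (simp add: cot_Digamma[OF assms])
qed

definition four1 :: "real \<Rightarrow> real \<Rightarrow> nat \<Rightarrow> real" where
  "four1 x a k = (if k = 0 then 1 else 2) * exp (- (2 * pi * real k * a)) * cos (2 * pi * real k * x)"

lemma cot_q:
  fixes w :: complex
  defines "q \<equiv> exp (2 * of_real pi * \<i> * w)"
  assumes "q \<noteq> 1"
  shows "of_real pi * cot (of_real pi * w) = - \<i> * of_real pi * (2 / (1 - q) - 1)"
proof -
  define E where "E = exp (\<i> * (of_real pi * w))"
  have E0: "E \<noteq> 0" by (simp add: E_def)
  have qE: "q = E * E" unfolding q_def E_def by (simp flip: exp_add add: algebra_simps)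
  have em: "exp (- (\<i> * (of_real pi * w))) = inverse E" by (simp add: E_def exp_minus)
  have c: "cos (of_real pi * w) = (q + 1) / (2 * E)"
    unfolding cos_exp_eq em E_def[symmetric] qE using E0 by (simp add: field_simps)
  have sn: "sin (of_real pi * w) = (q - 1) / (2 * \<i> * E)"
    unfolding sin_exp_eq em E_def[symmetric] qE using E0 by (simp add: field_simps)
  have "cot (of_real pi * w) = \<i> * (q + 1) / (q - 1)"
    unfolding cot_def c sn using E0 assms(2) by (simp add: field_simps)
  moreover have "1 - q \<noteq> 0" "q - 1 \<noteq> 0" using assms(2) by auto
  ultimately show ?thesis by (simp add: field_simps)
qed

lemma four1_sums:
  fixes x a :: real
  assumes a: "a > 0"
  defines "q \<equiv> exp (2 * of_real pi * \<i> * Complex x a)"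
  shows "(four1 x a) sums (2 * Re (1 / (1 - q)) - 1)"
proof -
  have nq: "norm q < 1" using a by (simp add: q_def)
  have g: "(\<lambda>k. q ^ k) sums (1 / (1 - q))" using geometric_sums[OF nq] by simp
  have re: "Re (q ^ k) = exp (- (2 * pi * real k * a)) * cos (2 * pi * real k * x)" for k
  proof -
    have "q ^ k = exp (of_nat k * (2 * of_real pi * \<i> * Complex x a))"
      unfolding q_def by (simp add: exp_of_nat_mult)
    also have "\<dots> = exp (Complex (- (2 * pi * real k * a)) (2 * pi * real k * x))"
      by (rule arg_cong[where f=exp]) (simp add: complex_eq_iff)
    finally show ?thesis by (simp add: Re_exp)
  qed
  have g2: "(\<lambda>k. 2 * Re (q ^ k)) sums (2 * Re (1 / (1 - q)))"
    using sums_mult[OF iffD1[OF sums_complex_iff g, THEN conjunct1], of 2] by simp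
  have "(\<lambda>k. 2 * Re (q ^ k) - (if k = 0 then 1 else 0)) sums (2 * Re (1 / (1 - q)) - 1)"
    by (intro sums_diff g2) (rule sums_single)
  moreover have "(\<lambda>k. 2 * Re (q ^ k) - (if k = 0 then 1 else 0)) = four1 x a"
    by (rule ext) (simp add: four1_def re)
  ultimately show ?thesis by simp
qed

lemma poisson1:
  assumes a: "a > 0"
  shows "(\<lambda>n. a / ((x + real n)\<^sup>2 + a\<^sup>2) + a / ((x - real n - 1)\<^sup>2 + a\<^sup>2)) sums (pi * (\<Sum>k. four1 x a k))"
proof -
  define w where "w = Complex x a"
  define q where "q = exp (2 * of_real pi * \<i> * w)"
  have wI: "w \<notin> \<int>" using a by (simp add: w_def complex_is_Int_iff)
  have nq: "norm q < 1" using a by (simp add: q_def w_def)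
  then have q1: "q \<noteq> 1" by auto
  have f: "(four1 x a) sums (2 * Re (1 / (1 - q)) - 1)"
    using four1_sums[OF a, of x] by (simp add: q_def w_def)
  have c: "(\<lambda>k. inverse (w + of_nat k) - inverse (1 - w + of_nat k)) sums (- \<i> * of_real pi * (2 / (1 - q) - 1))"
    using cot_sums[OF wI] cot_q[OF q1[unfolded q_def]] by (simp add: q_def)
  have ci: "(\<lambda>k. Im (inverse (w + of_nat k) - inverse (1 - w + of_nat k))) sums (- pi * (2 * Re (1 / (1 - q)) - 1))"
  proof -
    have r2: "Re (2 / (1 - q)) = 2 * Re (1 / (1 - q))" by (simp add: Re_divide)
    have "(\<lambda>k. Im (inverse (w + of_nat k) - inverse (1 - w + of_nat k))) sums (- pi * (Re (2 / (1 - q)) - 1))"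
      using iffD1[OF sums_complex_iff c, THEN conjunct2] by simp
    then show ?thesis by (simp only: r2)
  qed
  have t: "Im (inverse (w + of_nat k) - inverse (1 - w + of_nat k)) =
     - (a / ((x + real k)\<^sup>2 + a\<^sup>2) + a / ((x - real k - 1)\<^sup>2 + a\<^sup>2))" for k
    by (simp add: w_def Im_divide power2_eq_square algebra_simps)
  have "(\<lambda>n. a / ((x + real n)\<^sup>2 + a\<^sup>2) + a / ((x - real n - 1)\<^sup>2 + a\<^sup>2)) sums (pi * (2 * Re (1 / (1 - q)) - 1))"
    using sums_minus[OF ci[unfolded t]] by (simp add: add.commute)
  then show ?thesis by (simp only: sums_unique[OF f])
qed

lemma series_deriv:
  fixes f f' :: "nat \<Rightarrow> real \<Rightarrow> real"
  assumes d: "\<And>n t. t \<in> {l<..<r} \<Longrightarrow> (f n has_real_derivative f' n t) (at t)"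
    and b: "\<And>n t. t \<in> {l<..<r} \<Longrightarrow> \<bar>f' n t\<bar> \<le> M n" and M: "summable M"
    and t0: "t0 \<in> {l<..<r}" "summable (\<lambda>n. f n t0)" and t: "t \<in> {l<..<r}"
  shows "summable (\<lambda>n. f n t)" "((\<lambda>t. \<Sum>n. f n t) has_real_derivative (\<Sum>n. f' n t)) (at t)"
proof -
  have u: "uniformly_convergent_on {l<..<r} (\<lambda>n x. \<Sum>i<n. f' i x)"
    unfolding uniformly_convergent_on_def
    by (rule exI, rule Weierstrass_m_test[OF _ M]) (use b in auto)
  have d': "\<And>n x. x \<in> {l<..<r} \<Longrightarrow> (f n has_field_derivative f' n x) (at x within {l<..<r})"
    using d by (auto intro: has_field_derivative_at_within)
  have ti: "t \<in> interior {l<..<r}" using t by simp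
  note X = has_field_derivative_series'[OF convex_real_interval(8) d' u t0 ti]
  show "summable (\<lambda>n. f n t)" by (rule X(1))
  show "((\<lambda>t. \<Sum>n. f n t) has_real_derivative (\<Sum>n. f' n t)) (at t)" by (rule X(2))
qed

lemma series_deriv_summable':
  fixes f' :: "nat \<Rightarrow> real \<Rightarrow> real"
  assumes "\<And>n. \<bar>f' n t\<bar> \<le> M n" "summable M"
  shows "summable (\<lambda>n. f' n t)"
  by (rule summable_comparison_test'[OF assms(2), of 0]) (use assms(1) in auto)

lemma pow_le_exp:
  fixes x b :: real
  assumes "x \<ge> 0" "b > 0"
  shows "x ^ p \<le> (real p / b) ^ p * exp (b * x)"
proof (cases "p = 0")
  case True then show ?thesis using assms by simp
next
  case False
  have "b * x / real p \<le> exp (b * x / real p)"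
    using exp_ge_add_one_self[of "b * x / real p"] by linarith
  then have "(b * x / real p) ^ p \<le> exp (b * x / real p) ^ p"
    using assms False by (intro power_mono) auto
  also have "\<dots> = exp (b * x)"
    using False by (simp flip: exp_of_nat_mult)
  finally have *: "(b * x / real p) ^ p \<le> exp (b * x)" .
  have e: "(real p / b) * (b * x / real p) = x" using False assms by simp
  have "x ^ p = (real p / b) ^ p * (b * x / real p) ^ p"
    by (subst power_mult_distrib[symmetric]) (simp only: e)
  also have "\<dots> \<le> (real p / b) ^ p * exp (b * x)"
    using * assms by (intro mult_left_mono) auto
  finally show ?thesis .
qed

lemma summable_poly_exp:
  fixes b :: real
  assumes "b > 0"
  shows "summable (\<lambda>k. (real k + 1) ^ p * exp (- (b * real k)))"
proof (rule summable_comparison_test[of _ "\<lambda>k. ((real p / (b/2)) ^ p * exp (b/2)) * exp (- (b/2)) ^ k"])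
  show "summable (\<lambda>k. ((real p / (b/2)) ^ p * exp (b/2)) * exp (- (b/2)) ^ k)"
    using assms by (intro summable_mult summable_geometric) auto
  show "\<exists>N. \<forall>n\<ge>N. norm ((real n + 1) ^ p * exp (- (b * real n))) \<le> (real p / (b/2)) ^ p * exp (b/2) * exp (- (b/2)) ^ n"
  proof (intro exI allI impI)
    fix n :: nat
    have "(real n + 1) ^ p \<le> (real p / (b/2)) ^ p * exp (b/2 * (real n + 1))"
      using assms by (intro pow_le_exp) auto
    then have "(real n + 1) ^ p * exp (- (b * real n)) \<le> (real p / (b/2)) ^ p * exp (b/2 * (real n + 1)) * exp (- (b * real n))"
      by (intro mult_right_mono) auto
    also have "\<dots> = (real p / (b/2)) ^ p * exp (b/2) * exp (- (b/2)) ^ n"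
    proof -
      have "exp (- (b/2)) ^ n = exp (real n * (- (b/2)))" by (rule exp_of_nat_mult[symmetric])
      moreover have "exp (b/2 * (real n + 1)) * exp (- (b * real n)) = exp (b/2 * (real n + 1) + - (b * real n))"
        by (rule exp_add[symmetric])
      moreover have "exp (b/2) * exp (real n * (- (b/2))) = exp (b/2 + real n * (- (b/2)))"
        by (rule exp_add[symmetric])
      moreover have "b/2 * (real n + 1) + - (b * real n) = b/2 + real n * (- (b/2))" by (simp add: field_simps)
      ultimately show ?thesis by (simp add: mult.assoc)
    qed
    finally show "norm ((real n + 1) ^ p * exp (- (b * real n))) \<le> (real p / (b/2)) ^ p * exp (b/2) * exp (- (b/2)) ^ n"
      by simp
  qed
qed

definition qs :: "nat \<Rightarrow> real \<Rightarrow> nat \<Rightarrow> real \<Rightarrow> real" where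
  "qs p x n a = 1 / ((x + real n)\<^sup>2 + a\<^sup>2) ^ p + 1 / ((x - real n - 1)\<^sup>2 + a\<^sup>2) ^ p"

lemma d_inv_pow:
  fixes X a :: real
  assumes "X \<ge> 0" "a > 0"
  shows "((\<lambda>a. 1 / (X + a\<^sup>2) ^ p) has_real_derivative (- (2 * real p * a) / (X + a\<^sup>2) ^ Suc p)) (at a)"
proof (cases p)
  case 0 then show ?thesis by simp
next
  case (Suc m)
  define Y where "Y = X + a\<^sup>2"
  have pos: "Y > 0" using assms by (simp add: add_nonneg_pos Y_def)
  have d: "((\<lambda>a. (X + a\<^sup>2) ^ p) has_real_derivative (real p * (X + a\<^sup>2) ^ (p - 1) * (2 * a))) (at a)"
    by (auto intro!: derivative_eq_intros)
  have "((\<lambda>a. 1 / (X + a\<^sup>2) ^ p) has_real_derivative (- (real p * (X + a\<^sup>2) ^ (p - 1) * (2 * a)) / ((X + a\<^sup>2) ^ p)\<^sup>2)) (at a)"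
    using DERIV_inverse_fun[OF d] pos unfolding Y_def by (simp add: divide_inverse power2_eq_square)
  also have "- (real p * (X + a\<^sup>2) ^ (p - 1) * (2 * a)) / ((X + a\<^sup>2) ^ p)\<^sup>2 = - (2 * real p * a) / (X + a\<^sup>2) ^ Suc p"
    using pos unfolding Y_def[symmetric] Suc by (simp add: field_simps power2_eq_square)
  finally show ?thesis .
qed

lemma inv_pow_bound:
  fixes X a d :: real
  assumes "X \<ge> 0" "d > 0" "d \<le> a"
  shows "1 / (X + a\<^sup>2) ^ Suc p \<le> (1 / (d\<^sup>2) ^ p) * (1 / (X + d\<^sup>2))"
proof -
  have d2: "d\<^sup>2 \<le> a\<^sup>2" using assms by (intro power_mono) auto
  have d2': "d\<^sup>2 \<le> X + a\<^sup>2" using d2 assms by linarith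
  have "(X + d\<^sup>2) * (d\<^sup>2) ^ p \<le> (X + a\<^sup>2) * (X + a\<^sup>2) ^ p"
    using assms d2 d2' by (intro mult_mono power_mono) auto
  moreover have "(X + d\<^sup>2) * (d\<^sup>2) ^ p > 0" using assms by (intro mult_pos_pos add_nonneg_pos) auto
  ultimately show ?thesis by (simp add: field_simps)
qed

lemma qs_pos: "a > 0 \<Longrightarrow> qs p x n a > 0"
  unfolding qs_def by (intro add_pos_pos divide_pos_pos zero_less_power add_nonneg_pos) auto

lemma qs_deriv:
  assumes "a > 0"
  shows "((\<lambda>a. qs p x n a) has_real_derivative (- (2 * real p * a) * qs (Suc p) x n a)) (at a)"
proof -
  have "((\<lambda>a. 1 / ((x + real n)\<^sup>2 + a\<^sup>2) ^ p + 1 / ((x - real n - 1)\<^sup>2 + a\<^sup>2) ^ p) has_real_derivative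
     (- (2 * real p * a) / ((x + real n)\<^sup>2 + a\<^sup>2) ^ Suc p + - (2 * real p * a) / ((x - real n - 1)\<^sup>2 + a\<^sup>2) ^ Suc p)) (at a)"
    using assms by (intro DERIV_add d_inv_pow) auto
  then show ?thesis unfolding qs_def by (simp add: field_simps)
qed

lemma qs_bound:
  assumes "d > 0" "d \<le> a"
  shows "qs (Suc p) x n a \<le> (1 / (d\<^sup>2) ^ p) * qs 1 x n d"
proof -
  have "qs (Suc p) x n a \<le> (1 / (d\<^sup>2) ^ p) * (1 / ((x + real n)\<^sup>2 + d\<^sup>2)) + (1 / (d\<^sup>2) ^ p) * (1 / ((x - real n - 1)\<^sup>2 + d\<^sup>2))"
    unfolding qs_def using assms by (intro add_mono inv_pow_bound) auto
  then show ?thesis by (simp add: qs_def distrib_left)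
qed

lemma step:
  fixes G H :: "nat \<Rightarrow> real \<Rightarrow> real"
  assumes q1: "\<And>a. a > 0 \<Longrightarrow> summable (\<lambda>n. qs 1 x n a)"
    and S: "\<And>a. a > 0 \<Longrightarrow> (\<lambda>n. qs p x n a) sums (\<Sum>k. G k a)"
    and Gs: "\<And>a. a > 0 \<Longrightarrow> summable (\<lambda>k. G k a)"
    and Gd: "\<And>k a. a > 0 \<Longrightarrow> (G k has_real_derivative (- (2 * real p * a) * H k a)) (at a)"
    and Gb: "\<exists>M. summable M \<and> (\<forall>k a. a \<in> {a0/2<..<2*a0} \<longrightarrow> \<bar>- (2 * real p * a) * H k a\<bar> \<le> M k)"
    and p: "p \<ge> 1" and a0: "a0 > 0"
  shows "summable (\<lambda>k. H k a0)" "(\<lambda>n. qs (Suc p) x n a0) sums (\<Sum>k. H k a0)"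
proof -
  have a0I: "a0 \<in> {a0/2<..<2*a0}" using a0 by simp
  obtain M where M: "summable M" "\<And>k a. a \<in> {a0/2<..<2*a0} \<Longrightarrow> \<bar>- (2 * real p * a) * H k a\<bar> \<le> M k"
    using Gb by blast
  define Mq where "Mq n = 2 * real p * (2 * a0) * ((1 / ((a0/2)\<^sup>2) ^ p) * qs 1 x n (a0/2))" for n
  have Mqs: "summable Mq" unfolding Mq_def using q1[of "a0/2"] a0 by (intro summable_mult) auto
  have Mqb: "\<bar>- (2 * real p * a) * qs (Suc p) x n a\<bar> \<le> Mq n" if "a \<in> {a0/2<..<2*a0}" for n a
  proof -
    have a: "a > a0/2" "a < 2 * a0" using that by auto
    have "\<bar>- (2 * real p * a) * qs (Suc p) x n a\<bar> = 2 * real p * a * qs (Suc p) x n a"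
      using a a0 qs_pos[of a "Suc p" x n] by (simp add: abs_mult)
    also have "\<dots> \<le> 2 * real p * (2 * a0) * qs (Suc p) x n a"
    proof (rule mult_right_mono)
      show "2 * real p * a \<le> 2 * real p * (2 * a0)" using a by (intro mult_left_mono) auto
    qed (use qs_pos[of a "Suc p" x n] a in auto)
    also have "qs (Suc p) x n a \<le> (1 / ((a0/2)\<^sup>2) ^ p) * qs 1 x n (a0/2)"
      using a a0 by (intro qs_bound) auto
    finally show ?thesis unfolding Mq_def using a0 by (simp add: mult_left_mono)
  qed
  have dl: "((\<lambda>a. qs p x n a) has_real_derivative (- (2 * real p * a) * qs (Suc p) x n a)) (at a)"
    if "a \<in> {a0/2<..<2*a0}" for n a using that a0 by (intro qs_deriv) auto
  have sl0: "summable (\<lambda>n. qs p x n a0)" using S[OF a0] by (rule sums_summable)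
  note L = series_deriv[OF dl Mqb Mqs a0I sl0 a0I]
  have dG: "(G k has_real_derivative (- (2 * real p * a) * H k a)) (at a)" if "a \<in> {a0/2<..<2*a0}" for k a
    using that a0 by (intro Gd) auto
  note R = series_deriv[OF dG M(2) M(1) a0I Gs[OF a0] a0I]
  have eqf: "(\<Sum>n. qs p x n a) = (\<Sum>k. G k a)" if "a \<in> {0<..}" for a
    using S[of a] that by (simp add: sums_iff)
  have L': "((\<lambda>a. \<Sum>k. G k a) has_real_derivative (\<Sum>n. - (2 * real p * a0) * qs (Suc p) x n a0)) (at a0)"
    by (rule has_field_derivative_transform_within_open[OF L(2) open_greaterThan]) (use a0 eqf in auto)
  have eq: "(\<Sum>n. - (2 * real p * a0) * qs (Suc p) x n a0) = (\<Sum>k. - (2 * real p * a0) * H k a0)"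
    using DERIV_unique[OF L' R(2)] .
  have sH: "summable (\<lambda>k. - (2 * real p * a0) * H k a0)"
    by (rule series_deriv_summable'[of _ _ M]) (use M a0I in auto)
  have sQ: "summable (\<lambda>n. - (2 * real p * a0) * qs (Suc p) x n a0)"
    by (rule series_deriv_summable'[of _ _ Mq]) (use Mqb Mqs a0I in auto)
  have c0: "- (2 * real p * a0) \<noteq> 0" using p a0 by simp
  show sH': "summable (\<lambda>k. H k a0)"
    using summable_mult[OF sH, of "1 / (- (2 * real p * a0))"] c0 by simp
  have sQ': "summable (\<lambda>n. qs (Suc p) x n a0)"
    using summable_mult[OF sQ, of "1 / (- (2 * real p * a0))"] c0 by simp
  have "(\<Sum>n. qs (Suc p) x n a0) = (\<Sum>k. H k a0)"
  proof -
    have e1: "(\<Sum>n. - (2 * real p * a0) * qs (Suc p) x n a0) = - (2 * real p * a0) * (\<Sum>n. qs (Suc p) x n a0)"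
      by (rule suminf_mult[OF sQ'])
    have e2: "(\<Sum>k. - (2 * real p * a0) * H k a0) = - (2 * real p * a0) * (\<Sum>k. H k a0)"
      by (rule suminf_mult[OF sH'])
    show ?thesis using eq c0 unfolding e1 e2 by simp
  qed
  then show "(\<lambda>n. qs (Suc p) x n a0) sums (\<Sum>k. H k a0)"
    using sQ' by (simp add: sums_iff)
qed

definition wt :: "nat \<Rightarrow> real" where "wt k = (if k = 0 then 1 else 2)"

definition F1 :: "real \<Rightarrow> nat \<Rightarrow> real \<Rightarrow> real" where
  "F1 x k a = wt k * pi * cos (2 * pi * real k * x) * (exp (- (2 * pi * real k * a)) / a)"
definition F2 :: "real \<Rightarrow> nat \<Rightarrow> real \<Rightarrow> real" where
  "F2 x k a = wt k * pi * cos (2 * pi * real k * x) *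
     (exp (- (2 * pi * real k * a)) * (2 * pi * real k * a + 1) / (2 * a ^ 3))"
definition F3 :: "real \<Rightarrow> nat \<Rightarrow> real \<Rightarrow> real" where
  "F3 x k a = wt k * pi * cos (2 * pi * real k * x) *
     (exp (- (2 * pi * real k * a)) * ((2 * pi * real k * a)\<^sup>2 + 3 * (2 * pi * real k * a) + 3) / (8 * a ^ 5))"

lemma wt_bound: "\<bar>wt k * pi * cos t\<bar> \<le> 2 * pi"
proof -
  have "\<bar>wt k * pi * cos t\<bar> = wt k * pi * \<bar>cos t\<bar>" by (simp add: abs_mult wt_def)
  also have "\<dots> \<le> 2 * pi * 1" by (intro mult_mono) (auto simp: wt_def)
  finally show ?thesis by simp
qed

lemma S1:
  assumes "a > 0"
  shows "summable (\<lambda>k. F1 x k a)" "(\<lambda>n. qs 1 x n a) sums (\<Sum>k. F1 x k a)"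
proof -
  have fs: "summable (four1 x a)" using four1_sums[OF assms, of x] by (rule sums_summable)
  have F: "F1 x k a = (pi / a) * four1 x a k" for k
    by (simp add: F1_def four1_def wt_def)
  show "summable (\<lambda>k. F1 x k a)" unfolding F using fs by (rule summable_mult)
  have "(\<lambda>n. (1 / a) * (a / ((x + real n)\<^sup>2 + a\<^sup>2) + a / ((x - real n - 1)\<^sup>2 + a\<^sup>2))) sums ((1 / a) * (pi * (\<Sum>k. four1 x a k)))"
    by (rule sums_mult[OF poisson1[OF assms]])
  moreover have "(1 / a) * (a / ((x + real n)\<^sup>2 + a\<^sup>2) + a / ((x - real n - 1)\<^sup>2 + a\<^sup>2)) = qs 1 x n a" for n
  proof -
    have "(x + real n)\<^sup>2 + a\<^sup>2 > 0" "(x - real n - 1)\<^sup>2 + a\<^sup>2 > 0" using assms by (auto intro: add_nonneg_pos)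
    then show ?thesis using assms by (simp add: qs_def divide_simps) (simp add: algebra_simps)
  qed
  moreover have "(1 / a) * (pi * (\<Sum>k. four1 x a k)) = (\<Sum>k. F1 x k a)"
    unfolding F suminf_mult[OF fs] by simp
  ultimately show "(\<lambda>n. qs 1 x n a) sums (\<Sum>k. F1 x k a)" by simp
qed

lemma E1: "a > 0 \<Longrightarrow> ((\<lambda>a. exp (- (c * a)) / a) has_real_derivative
    (- (2 * real (1::nat) * a) * (exp (- (c * a)) * (c * a + 1) / (2 * a ^ 3)))) (at a)"
  by (rule derivative_eq_intros refl | simp)+ (simp add: field_simps power2_eq_square power3_eq_cube)

lemma E2: "a > 0 \<Longrightarrow> ((\<lambda>a. exp (- (c * a)) * (c * a + 1) / (2 * a ^ 3)) has_real_derivative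
    (- (2 * real (2::nat) * a) * (exp (- (c * a)) * ((c * a)\<^sup>2 + 3 * (c * a) + 3) / (8 * a ^ 5)))) (at a)"
  by (rule derivative_eq_intros refl | simp)+ (simp add: field_simps eval_nat_numeral)

lemma F1d: "a > 0 \<Longrightarrow> (F1 x k has_real_derivative (- (2 * real (1::nat) * a) * F2 x k a)) (at a)"
proof -
  assume a: "a > 0"
  have "((\<lambda>a. wt k * pi * cos (2 * pi * real k * x) * (exp (- ((2 * pi * real k) * a)) / a)) has_real_derivative
     (wt k * pi * cos (2 * pi * real k * x) * (- (2 * real (1::nat) * a) * (exp (- ((2 * pi * real k) * a)) * ((2 * pi * real k) * a + 1) / (2 * a ^ 3))))) (at a)"
    by (rule DERIV_cmult[OF E1[OF a]])
  then show ?thesis unfolding F1_def[abs_def] F2_def by (simp add: algebra_simps)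
qed

lemma F2d: "a > 0 \<Longrightarrow> (F2 x k has_real_derivative (- (2 * real (2::nat) * a) * F3 x k a)) (at a)"
proof -
  assume a: "a > 0"
  have "((\<lambda>a. wt k * pi * cos (2 * pi * real k * x) * (exp (- ((2 * pi * real k) * a)) * ((2 * pi * real k) * a + 1) / (2 * a ^ 3))) has_real_derivative
     (wt k * pi * cos (2 * pi * real k * x) * (- (2 * real (2::nat) * a) * (exp (- ((2 * pi * real k) * a)) * (((2 * pi * real k) * a)\<^sup>2 + 3 * ((2 * pi * real k) * a) + 3) / (8 * a ^ 5))))) (at a)"
    by (rule DERIV_cmult[OF E2[OF a]])
  then show ?thesis unfolding F2_def[abs_def] F3_def by (simp add: algebra_simps)
qed

lemma exp_bnd:
  assumes "a0 > 0" "a0 / 2 < a"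
  shows "exp (- (2 * pi * real k * a)) \<le> exp (- (pi * a0 * real k))"
proof -
  have "pi * a0 * real k \<le> 2 * pi * real k * a"
  proof -
    have "pi * real k * a0 \<le> pi * real k * (2 * a)" using assms by (intro mult_left_mono) auto
    then show ?thesis by (simp add: algebra_simps)
  qed
  then show ?thesis by simp
qed

lemma ca_bnd:
  assumes "a0 > 0" "a0 / 2 < a" "a < 2 * a0"
  shows "0 \<le> 2 * pi * real k * a" "2 * pi * real k * a \<le> 4 * pi * a0 * (real k + 1)"
proof -
  show "0 \<le> 2 * pi * real k * a" using assms by simp
  have "2 * pi * real k * a \<le> 2 * pi * (real k + 1) * (2 * a0)"
    using assms by (intro mult_mono) auto
  then show "2 * pi * real k * a \<le> 4 * pi * a0 * (real k + 1)" by (simp add: algebra_simps)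
qed

lemma B1:
  assumes a0: "a0 > 0" and a: "a \<in> {a0/2<..<2*a0}"
  shows "\<bar>- (2 * real (1::nat) * a) * F2 x k a\<bar> \<le>
    (2 * pi * (4 * pi * a0 + 1) * (4 / a0\<^sup>2)) * ((real k + 1) ^ 1 * exp (- (pi * a0 * real k)))"
proof -
  define c where "c = 2 * pi * real k"
  define K where "K = wt k * pi * cos (2 * pi * real k * x)"
  have ap: "a > 0" "a0/2 < a" "a < 2 * a0" using a a0 by auto
  have e: "exp (- (c * a)) \<le> exp (- (pi * a0 * real k))" unfolding c_def using exp_bnd[OF a0 ap(2)] .
  have ca: "0 \<le> c * a" "c * a \<le> 4 * pi * a0 * (real k + 1)" unfolding c_def using ca_bnd[OF a0 ap(2,3)] by auto
  have ia: "1 / a\<^sup>2 \<le> 4 / a0\<^sup>2"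
  proof -
    have "(a0/2)\<^sup>2 \<le> a\<^sup>2" using ap a0 by (intro power_mono) auto
    then have "1 / a\<^sup>2 \<le> 1 / (a0/2)\<^sup>2" using a0 ap by (intro divide_left_mono) auto
    then show ?thesis by (simp add: power_divide)
  qed
  have F: "F2 x k a = K * (exp (- (c * a)) * (c * a + 1) / (2 * a ^ 3))" by (simp add: F2_def K_def c_def)
  have E0: "exp (- (c * a)) * (c * a + 1) / (2 * a ^ 3) \<ge> 0" using ap ca by simp
  have eq: "\<bar>- (2 * real (1::nat) * a) * F2 x k a\<bar> = \<bar>K\<bar> * (exp (- (c * a)) * (c * a + 1) * (1 / a\<^sup>2))"
  proof -
    have "\<bar>- (2 * real (1::nat) * a) * F2 x k a\<bar> = \<bar>K\<bar> * ((2 * a) * (exp (- (c * a)) * (c * a + 1) / (2 * a ^ 3)))"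
      unfolding F using ap E0 ca by (simp add: abs_mult)
    also have "(2 * a) * (exp (- (c * a)) * (c * a + 1) / (2 * a ^ 3)) = exp (- (c * a)) * (c * a + 1) * (1 / a\<^sup>2)"
      using ap by (simp add: field_simps eval_nat_numeral)
    finally show ?thesis .
  qed
  have c1: "c * a + 1 \<le> (4 * pi * a0 + 1) * (real k + 1)"
    using ca(2) by (simp add: algebra_simps)
  have "\<bar>K\<bar> * (exp (- (c * a)) * (c * a + 1) * (1 / a\<^sup>2)) \<le>
      (2 * pi) * (exp (- (pi * a0 * real k)) * ((4 * pi * a0 + 1) * (real k + 1)) * (4 / a0\<^sup>2))"
    using wt_bound[of k] e c1 ia ca by (intro mult_mono) (auto simp: K_def)
  then show ?thesis unfolding eq by (simp add: algebra_simps)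
qed

lemma B2:
  assumes a0: "a0 > 0" and a: "a \<in> {a0/2<..<2*a0}"
  shows "\<bar>- (2 * real (2::nat) * a) * F3 x k a\<bar> \<le>
    (2 * pi * ((4 * pi * a0)\<^sup>2 + 3 * (4 * pi * a0) + 3) * (8 / a0 ^ 4)) * ((real k + 1) ^ 2 * exp (- (pi * a0 * real k)))"
proof -
  define c where "c = 2 * pi * real k"
  define K where "K = wt k * pi * cos (2 * pi * real k * x)"
  have ap: "a > 0" "a0/2 < a" "a < 2 * a0" using a a0 by auto
  have e: "exp (- (c * a)) \<le> exp (- (pi * a0 * real k))" unfolding c_def using exp_bnd[OF a0 ap(2)] .
  have ca: "0 \<le> c * a" "c * a \<le> 4 * pi * a0 * (real k + 1)" unfolding c_def using ca_bnd[OF a0 ap(2,3)] by auto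
  have ia: "1 / (2 * a ^ 4) \<le> 8 / a0 ^ 4"
  proof -
    have "(a0/2) ^ 4 \<le> a ^ 4" using ap a0 by (intro power_mono) auto
    then have "1 / a ^ 4 \<le> 1 / (a0/2) ^ 4" using a0 ap by (intro divide_left_mono) auto
    then have "1 / a ^ 4 \<le> 16 / a0 ^ 4" by (simp add: power_divide)
    then show ?thesis by simp
  qed
  have F: "F3 x k a = K * (exp (- (c * a)) * ((c * a)\<^sup>2 + 3 * (c * a) + 3) / (8 * a ^ 5))" by (simp add: F3_def K_def c_def)
  have E0: "exp (- (c * a)) * ((c * a)\<^sup>2 + 3 * (c * a) + 3) / (8 * a ^ 5) \<ge> 0" using ap ca by simp
  have eq: "\<bar>- (2 * real (2::nat) * a) * F3 x k a\<bar> = \<bar>K\<bar> * (exp (- (c * a)) * ((c * a)\<^sup>2 + 3 * (c * a) + 3) * (1 / (2 * a ^ 4)))"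
  proof -
    have "\<bar>- (2 * real (2::nat) * a) * F3 x k a\<bar> = \<bar>K\<bar> * ((4 * a) * (exp (- (c * a)) * ((c * a)\<^sup>2 + 3 * (c * a) + 3) / (8 * a ^ 5)))"
      unfolding F using ap E0 ca by (simp add: abs_mult)
    also have "(4 * a) * (exp (- (c * a)) * ((c * a)\<^sup>2 + 3 * (c * a) + 3) / (8 * a ^ 5)) = exp (- (c * a)) * ((c * a)\<^sup>2 + 3 * (c * a) + 3) * (1 / (2 * a ^ 4))"
      using ap by (simp add: field_simps eval_nat_numeral)
    finally show ?thesis .
  qed
  have k1: "1 \<le> real k + 1" by simp
  have k2: "real k + 1 \<le> (real k + 1)\<^sup>2" using k1 by (simp add: power2_eq_square)
  have c2: "(c * a)\<^sup>2 \<le> (4 * pi * a0)\<^sup>2 * (real k + 1)\<^sup>2"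
    using ca power_mono[OF ca(2), of 2] by (simp add: power_mult_distrib)
  have c3: "3 * (c * a) \<le> 3 * (4 * pi * a0) * (real k + 1)\<^sup>2"
  proof -
    have "3 * (c * a) \<le> 3 * (4 * pi * a0) * (real k + 1)" using ca(2) by (simp add: algebra_simps)
    also have "\<dots> \<le> 3 * (4 * pi * a0) * (real k + 1)\<^sup>2" using k2 a0 by (intro mult_left_mono) auto
    finally show ?thesis .
  qed
  have c4: "(3::real) \<le> 3 * (real k + 1)\<^sup>2" using k1 k2 by linarith
  have cc: "(c * a)\<^sup>2 + 3 * (c * a) + 3 \<le> ((4 * pi * a0)\<^sup>2 + 3 * (4 * pi * a0) + 3) * (real k + 1)\<^sup>2"
    using c2 c3 c4 by (simp add: algebra_simps del: one_le_power) linarith?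
  have "\<bar>K\<bar> * (exp (- (c * a)) * ((c * a)\<^sup>2 + 3 * (c * a) + 3) * (1 / (2 * a ^ 4))) \<le>
      (2 * pi) * (exp (- (pi * a0 * real k)) * (((4 * pi * a0)\<^sup>2 + 3 * (4 * pi * a0) + 3) * (real k + 1)\<^sup>2) * (8 / a0 ^ 4))"
    using wt_bound[of k] e cc ia ca a0 by (intro mult_mono) (auto simp: K_def)
  then show ?thesis unfolding eq by (simp add: algebra_simps)
qed

lemma S23:
  assumes "a > 0"
  shows "summable (\<lambda>k. F3 x k a)" "(\<lambda>n. qs 3 x n a) sums (\<Sum>k. F3 x k a)"
proof -
  have q1: "\<And>a. a > 0 \<Longrightarrow> summable (\<lambda>n. qs 1 x n a)" using S1 by (blast intro: sums_summable)
  have Gb1: "\<exists>M. summable M \<and> (\<forall>k a. a \<in> {a0/2<..<2*a0} \<longrightarrow> \<bar>- (2 * real (1::nat) * a) * F2 x k a\<bar> \<le> M k)"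
    if "a0 > 0" for a0
    using that summable_poly_exp[of "pi * a0" 1] B1[OF that]
    by (intro exI[of _ "\<lambda>k. (2 * pi * (4 * pi * a0 + 1) * (4 / a0\<^sup>2)) * ((real k + 1) ^ 1 * exp (- (pi * a0 * real k)))"])
      (auto intro: summable_mult)
  have Gb2: "\<exists>M. summable M \<and> (\<forall>k a. a \<in> {a0/2<..<2*a0} \<longrightarrow> \<bar>- (2 * real (2::nat) * a) * F3 x k a\<bar> \<le> M k)"
    if "a0 > 0" for a0
    using that summable_poly_exp[of "pi * a0" 2] B2[OF that]
    by (intro exI[of _ "\<lambda>k. (2 * pi * ((4 * pi * a0)\<^sup>2 + 3 * (4 * pi * a0) + 3) * (8 / a0 ^ 4)) * ((real k + 1) ^ 2 * exp (- (pi * a0 * real k)))"])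
      (auto intro: summable_mult)
  have s2: "summable (\<lambda>k. F2 x k a) \<and> (\<lambda>n. qs 2 x n a) sums (\<Sum>k. F2 x k a)" if "a > 0" for a
    using step[where p=1 and G="F1 x" and H="F2 x", OF q1 S1(2) S1(1) F1d Gb1[OF that] _ that] that
    by (auto simp: numeral_2_eq_2)
  show "summable (\<lambda>k. F3 x k a)" "(\<lambda>n. qs 3 x n a) sums (\<Sum>k. F3 x k a)"
    using step[where p=2 and G="F2 x" and H="F3 x", OF q1 _ _ F2d Gb2[OF assms] _ assms] s2
    by (auto simp: numeral_3_eq_3 numeral_2_eq_2)
qed

lemma int_has_sum:
  fixes f :: "int \<Rightarrow> real"
  assumes nn: "\<And>n. f n \<ge> 0"
    and s1: "(\<lambda>n. f (int n)) sums S1" and s2: "(\<lambda>n. f (- int n - 1)) sums S2"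
  shows "(f has_sum (S1 + S2)) UNIV"
proof -
  have h1: "((f \<circ> int) has_sum S1) UNIV"
    using sums_nonneg_imp_has_sum[OF s1] nn by (simp add: o_def)
  have h2: "((f \<circ> (\<lambda>n. - int n - 1)) has_sum S2) UNIV"
    using sums_nonneg_imp_has_sum[OF s2] nn by (simp add: o_def)
  have i1: "inj_on int UNIV" by (simp add: inj_on_def)
  have i2: "inj_on (\<lambda>n::nat. - int n - 1) UNIV" by (simp add: inj_on_def)
  have H1: "(f has_sum S1) (range int)" by (subst has_sum_reindex[OF i1]) (rule h1)
  have H2: "(f has_sum S2) (range (\<lambda>n::nat. - int n - 1))" by (subst has_sum_reindex[OF i2]) (rule h2)
  have disj: "range int \<inter> range (\<lambda>n::nat. - int n - 1) = {}" by auto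
  have un: "range int \<union> range (\<lambda>n::nat. - int n - 1) = UNIV"
  proof (rule set_eqI, rule iffI)
    fix z :: int
    show "z \<in> range int \<union> range (\<lambda>n::nat. - int n - 1)"
    proof (cases "z \<ge> 0")
      case True then show ?thesis by (auto intro: image_eqI[of _ _ "nat z"])
    next
      case False then show ?thesis by (auto intro!: image_eqI[of _ _ "nat (- z - 1)"])
    qed
  qed simp
  show ?thesis using has_sum_Un_disjoint[OF H1 H2 disj] un by simp
qed

lemma int_has_sum_pairs:
  fixes f :: "int \<Rightarrow> real"
  assumes nn: "\<And>n. f n \<ge> 0"
    and s: "(\<lambda>n. f (int n) + f (- int n - 1)) sums S"
  shows "(f has_sum S) UNIV"
proof -
  have sm1: "summable (\<lambda>n. f (int n))"
    by (rule summable_comparison_test'[OF sums_summable[OF s], of 0]) (use nn in \<open>auto intro: add_increasing2\<close>)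
  have sm2: "summable (\<lambda>n. f (- int n - 1))"
    by (rule summable_comparison_test'[OF sums_summable[OF s], of 0]) (use nn in \<open>auto intro: add_increasing\<close>)
  have "(\<lambda>n. f (int n) + f (- int n - 1)) sums ((\<Sum>n. f (int n)) + (\<Sum>n. f (- int n - 1)))"
    using sums_add[OF summable_sums[OF sm1] summable_sums[OF sm2]] .
  then have S: "S = (\<Sum>n. f (int n)) + (\<Sum>n. f (- int n - 1))" using s sums_unique2 by blast
  show ?thesis unfolding S by (rule int_has_sum[OF nn summable_sums[OF sm1] summable_sums[OF sm2]])
qed

definition c0 :: real where "c0 = infsum (\<lambda>n::int. 1 / (real_of_int n) ^ 6) (- {0})"

definition TT :: "real \<Rightarrow> real \<Rightarrow> nat \<Rightarrow> real" where
  "TT u t k = t ^ 3 * (\<Sum>j. F3 (real (Suc k) * u) j (real (Suc k) * t))"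

lemma F3_even: "F3 (- x) j a = F3 x j a"
  by (simp add: F3_def)

lemma row_nz:
  fixes m :: int and u t :: real
  assumes t: "t > 0" and m: "m \<noteq> 0"
  shows "((\<lambda>n::int. t ^ 3 / ((real_of_int m * u + real_of_int n)\<^sup>2 + (real_of_int m * t)\<^sup>2) ^ 3) has_sum
           (t ^ 3 * (\<Sum>j. F3 (real_of_int m * u) j (\<bar>real_of_int m\<bar> * t)))) UNIV"
proof -
  define x where "x = real_of_int m * u"
  define a where "a = \<bar>real_of_int m\<bar> * t"
  have a: "a > 0" using t m by (simp add: a_def)
  have s: "(\<lambda>k. t ^ 3 * qs 3 x k a) sums (t ^ 3 * (\<Sum>j. F3 x j a))"
    by (rule sums_mult[OF S23(2)[OF a]])
  have pair: "t ^ 3 / ((real_of_int m * u + real_of_int (int k))\<^sup>2 + (real_of_int m * t)\<^sup>2) ^ 3 +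
      t ^ 3 / ((real_of_int m * u + real_of_int (- int k - 1))\<^sup>2 + (real_of_int m * t)\<^sup>2) ^ 3 = t ^ 3 * qs 3 x k a" for k
  proof -
    have e1: "(real_of_int m * t)\<^sup>2 = a\<^sup>2" by (simp add: a_def power_mult_distrib)
    have e2: "real_of_int m * u + real_of_int (- int k - 1) = x - real k - 1" by (simp add: x_def)
    have e3: "real_of_int m * u + real_of_int (int k) = x + real k" by (simp add: x_def)
    show ?thesis unfolding e1 e2 e3 by (simp add: qs_def distrib_left)
  qed
  have s': "(\<lambda>k. t ^ 3 / ((real_of_int m * u + real_of_int (int k))\<^sup>2 + (real_of_int m * t)\<^sup>2) ^ 3 +
      t ^ 3 / ((real_of_int m * u + real_of_int (- int k - 1))\<^sup>2 + (real_of_int m * t)\<^sup>2) ^ 3) sums (t ^ 3 * (\<Sum>j. F3 x j a))"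
    unfolding pair by (rule s)
  show ?thesis
    by (rule int_has_sum_pairs) (use t s'[unfolded x_def a_def] in auto)
qed

lemma row_zero:
  fixes t :: real
  shows "((\<lambda>n::int. 1 / (real_of_int n) ^ 6) summable_on (- {0}))"
proof -
  define h where "h n = (if n = 0 then 0 else 1 / (real_of_int n) ^ 6)" for n :: int
  have sm: "summable (\<lambda>k. h (int k) + h (- int k - 1))"
  proof (rule summable_comparison_test'[of "\<lambda>k. 2 * inverse (real k ^ 2)" 1])
    show "summable (\<lambda>k. 2 * inverse (real k ^ 2))" by (intro summable_mult inverse_power_summable) auto
    fix k :: nat assume k: "k \<ge> 1"
    have k0: "real k \<ge> 1" using k by simp
    have e1: "1 / real k ^ 6 \<le> inverse (real k ^ 2)"
    proof -
      have "real k ^ 2 \<le> real k ^ 6" using k0 by (intro power_increasing) auto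
      then show ?thesis using k0 by (simp add: divide_simps)
    qed
    have e2: "1 / (real k + 1) ^ 6 \<le> inverse (real k ^ 2)"
    proof -
      have "real k ^ 2 \<le> (real k + 1) ^ 2" using k0 by (intro power_mono) auto
      also have "\<dots> \<le> (real k + 1) ^ 6" using k0 by (intro power_increasing) auto
      finally show ?thesis using k0 by (simp add: divide_simps)
    qed
    have "h (int k) + h (- int k - 1) = 1 / real k ^ 6 + 1 / (real k + 1) ^ 6"
    proof -
      have m: "(- real k - 1) = - (real k + 1)" by simp
      have "(- real k - 1) ^ 6 = (real k + 1) ^ 6" unfolding m by (rule Parity.power_minus_even) simp
      then show ?thesis using k by (simp add: h_def)
    qed
    also have "\<dots> \<le> 2 * inverse (real k ^ 2)" using e1 e2 by simp
    finally show "norm (h (int k) + h (- int k - 1)) \<le> 2 * inverse (real k ^ 2)"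
      using k by (simp add: h_def)
  qed
  have "(h has_sum (\<Sum>k. h (int k) + h (- int k - 1))) UNIV"
    by (rule int_has_sum_pairs[OF _ summable_sums[OF sm]]) (simp add: h_def)
  then have "h summable_on (- {0})" by (meson has_sum_iff subset_UNIV summable_on_subset_banach)
  then show ?thesis by (rule iffD1[OF summable_on_cong, rotated]) (simp add: h_def)
qed

lemma F1_four1: "F1 x k a = (pi / a) * four1 x a k"
  by (simp add: F1_def four1_def wt_def)

lemma sum_four1_le:
  assumes t: "t > 0" and a: "a \<ge> t"
  shows "(\<Sum>j. four1 x a j) \<le> 2 / (1 - exp (- (2 * pi * t)))"
proof -
  define e where "e = exp (- (2 * pi * t))"
  have e: "0 < e" "e < 1" using t by (auto simp: e_def)
  have a0: "a > 0" using t a by simp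
  have fs: "summable (four1 x a)" using four1_sums[OF a0, of x] by (rule sums_summable)
  have gs: "summable (\<lambda>j. 2 * e ^ j)" using e by (intro summable_mult summable_geometric) auto
  have le: "four1 x a j \<le> 2 * e ^ j" for j
  proof -
    have f: "four1 x a j = wt j * exp (- (2 * pi * real j * a)) * cos (2 * pi * real j * x)"
      by (simp add: four1_def wt_def)
    have "wt j * exp (- (2 * pi * real j * a)) * cos (2 * pi * real j * x) \<le> wt j * exp (- (2 * pi * real j * a)) * 1"
      by (intro mult_left_mono) (auto simp: wt_def)
    then have "four1 x a j \<le> wt j * exp (- (2 * pi * real j * a))" by (simp add: f)
    also have "\<dots> \<le> 2 * exp (- (2 * pi * real j * t))"
    proof (intro mult_mono)
      show "wt j \<le> 2" by (simp add: wt_def)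
      have "2 * pi * real j * t \<le> 2 * pi * real j * a" using a t by (intro mult_left_mono) auto
      then show "exp (- (2 * pi * real j * a)) \<le> exp (- (2 * pi * real j * t))" by simp
    qed auto
    also have "exp (- (2 * pi * real j * t)) = e ^ j"
      unfolding e_def by (subst exp_of_nat_mult[symmetric]) (simp add: algebra_simps)
    finally show ?thesis .
  qed
  have "(\<Sum>j. four1 x a j) \<le> (\<Sum>j. 2 * e ^ j)" by (rule suminf_le[OF le fs gs])
  also have "\<dots> = 2 / (1 - e)" using e by (simp add: suminf_mult suminf_geometric summable_geometric divide_simps)
  finally show ?thesis by (simp add: e_def)
qed

lemma TT_bound:
  assumes t: "t > 0"
  shows "0 \<le> TT u t k" "TT u t k \<le> (t ^ 3 * (pi * (2 / (1 - exp (- (2 * pi * t))))) / t ^ 5) * inverse (real (Suc k) ^ 2)"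
proof -
  define a where "a = real (Suc k) * t"
  define x where "x = real (Suc k) * u"
  have at: "a \<ge> t" using t by (simp add: a_def)
  have a0: "a > 0" using t by (simp add: a_def)
  have s3: "(\<lambda>n. qs 3 x n a) sums (\<Sum>j. F3 x j a)" using S23(2)[OF a0] .
  have s1: "(\<lambda>n. qs 1 x n a) sums (\<Sum>j. F1 x j a)" using S1(2)[OF a0] .
  have nn: "0 \<le> (\<Sum>j. F3 x j a)"
  proof -
    have "(\<Sum>j. F3 x j a) = (\<Sum>n. qs 3 x n a)" using s3 by (simp add: sums_iff)
    also have "\<dots> \<ge> 0" by (rule suminf_nonneg[OF sums_summable[OF s3]]) (use qs_pos[OF a0] in \<open>auto intro: less_imp_le\<close>)
    finally show ?thesis .
  qed
  show "0 \<le> TT u t k" unfolding TT_def a_def[symmetric] x_def[symmetric] using nn t by simp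
  have "(\<Sum>j. F3 x j a) \<le> (1 / (a\<^sup>2) ^ 2) * (\<Sum>j. F1 x j a)"
  proof (rule sums_le[OF _ s3])
    show "(\<lambda>n. (1 / (a\<^sup>2) ^ 2) * qs 1 x n a) sums ((1 / (a\<^sup>2) ^ 2) * (\<Sum>j. F1 x j a))"
      by (rule sums_mult[OF s1])
    show "qs 3 x n a \<le> (1 / (a\<^sup>2) ^ 2) * qs 1 x n a" for n
      using qs_bound[of a a 2 x n] a0 by (simp add: numeral_3_eq_3 numeral_2_eq_2)
  qed
  also have "(\<Sum>j. F1 x j a) = (pi / a) * (\<Sum>j. four1 x a j)"
    unfolding F1_four1 by (rule suminf_mult) (rule sums_summable[OF four1_sums[OF a0]])
  also have "(1 / (a\<^sup>2) ^ 2) * ((pi / a) * (\<Sum>j. four1 x a j)) \<le> (1 / (a\<^sup>2) ^ 2) * ((pi / a) * (2 / (1 - exp (- (2 * pi * t)))))"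
    using sum_four1_le[OF t at, of x] a0 by (intro mult_left_mono) auto
  also have "(1 / (a\<^sup>2) ^ 2) * ((pi / a) * (2 / (1 - exp (- (2 * pi * t))))) = (pi * (2 / (1 - exp (- (2 * pi * t))))) * (1 / a ^ 5)"
    by (simp add: field_simps eval_nat_numeral)
  also have "\<dots> \<le> (pi * (2 / (1 - exp (- (2 * pi * t))))) * (1 / (t ^ 5 * real (Suc k) ^ 2))"
  proof (rule mult_left_mono)
    have "real (Suc k) ^ 2 \<le> real (Suc k) ^ 5" by (intro power_increasing) auto
    then have "t ^ 5 * real (Suc k) ^ 2 \<le> a ^ 5" unfolding a_def using t
      by (simp add: power_mult_distrib mult.commute mult_left_mono)
    then show "1 / a ^ 5 \<le> 1 / (t ^ 5 * real (Suc k) ^ 2)" using t a0 by (intro divide_left_mono) auto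
    have "exp (- (2 * pi * t)) < 1" using t by simp
    then show "0 \<le> pi * (2 / (1 - exp (- (2 * pi * t))))" by simp
  qed
  finally have b: "(\<Sum>j. F3 x j a) \<le> (pi * (2 / (1 - exp (- (2 * pi * t))))) * (1 / (t ^ 5 * real (Suc k) ^ 2))" .
  have "TT u t k = t ^ 3 * (\<Sum>j. F3 x j a)" unfolding TT_def a_def x_def ..
  also have "\<dots> \<le> t ^ 3 * ((pi * (2 / (1 - exp (- (2 * pi * t))))) * (1 / (t ^ 5 * real (Suc k) ^ 2)))"
    using b t by (intro mult_left_mono) auto
  finally show "TT u t k \<le> (t ^ 3 * (pi * (2 / (1 - exp (- (2 * pi * t))))) / t ^ 5) * inverse (real (Suc k) ^ 2)"
    by (simp add: field_simps)
qed

lemma TT_summable: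
  assumes t: "t > 0"
  shows "summable (TT u t)"
proof (rule summable_comparison_test'[of "\<lambda>k. (t ^ 3 * (pi * (2 / (1 - exp (- (2 * pi * t))))) / t ^ 5) * inverse (real (Suc k) ^ 2)" 0])
  have "summable (\<lambda>k. inverse (real k ^ 2))" by (rule inverse_power_summable) auto
  then have "summable (\<lambda>k. inverse (real (Suc k) ^ 2))" by (subst summable_Suc_iff)
  then show "summable (\<lambda>k. (t ^ 3 * (pi * (2 / (1 - exp (- (2 * pi * t))))) / t ^ 5) * inverse (real (Suc k) ^ 2))"
    by (rule summable_mult)
  show "norm (TT u t n) \<le> (t ^ 3 * (pi * (2 / (1 - exp (- (2 * pi * t))))) / t ^ 5) * inverse (real (Suc n) ^ 2)" for n
    using TT_bound[OF t, of u n] by simp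
qed

lemma zeta_decomp:
  fixes u t :: real
  assumes t: "t > 0"
  shows "epstein_zeta 3 (Complex u t) = t ^ 3 * c0 + 2 * (\<Sum>k. TT u t k)"
proof -
  define g :: "int \<times> int \<Rightarrow> real" where
    "g p = t ^ 3 / ((real_of_int (fst p) * u + real_of_int (snd p))\<^sup>2 + (real_of_int (fst p) * t)\<^sup>2) ^ 3" for p
  define B :: "int \<Rightarrow> int set" where "B m = (if m = 0 then - {0} else UNIV)" for m
  define R :: "int \<Rightarrow> real" where
    "R m = (if m = 0 then t ^ 3 * c0 else t ^ 3 * (\<Sum>j. F3 (real_of_int m * u) j (\<bar>real_of_int m\<bar> * t)))" for m
  have gnn: "g p \<ge> 0" for p using t by (simp add: g_def)
  have pos: "(real_of_int m * u + real_of_int n)\<^sup>2 + (real_of_int m * t)\<^sup>2 > 0" if "(m, n) \<noteq> (0, 0)" for m n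
  proof (cases "m = 0")
    case True then have "n \<noteq> 0" using that by simp
    then show ?thesis using True by simp
  next
    case False then have "(real_of_int m * t)\<^sup>2 > 0" using t by simp
    then show ?thesis by (simp add: add_nonneg_pos)
  qed
  have summand: "Im (Complex u t) powr 3 / cmod (of_int m * Complex u t + of_int n) powr (2 * 3) = g (m, n)"
    if "(m, n) \<in> UNIV - {(0, 0)}" for m n
  proof -
    have c2: "(cmod (of_int m * Complex u t + of_int n))\<^sup>2 = (real_of_int m * u + real_of_int n)\<^sup>2 + (real_of_int m * t)\<^sup>2"
      by (simp add: cmod_power2)
    have cpos: "cmod (of_int m * Complex u t + of_int n) > 0"
    proof -
      have "(cmod (of_int m * Complex u t + of_int n))\<^sup>2 > 0" using pos[of m n] that c2 by simp
      then have "cmod (of_int m * Complex u t + of_int n) \<noteq> 0" by auto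
      then show ?thesis using norm_ge_zero[of "of_int m * Complex u t + of_int n"] by linarith
    qed
    have "cmod (of_int m * Complex u t + of_int n) powr (2 * 3) = (cmod (of_int m * Complex u t + of_int n))^6"
      using cpos by simp
    also have "\<dots> = ((cmod (of_int m * Complex u t + of_int n))\<^sup>2) ^ 3" by (simp flip: power_mult)
    finally show ?thesis unfolding c2 g_def using t by simp
  qed
  have e1: "epstein_zeta 3 (Complex u t) = infsum g (UNIV - {(0, 0)})"
    unfolding epstein_zeta_def by (rule infsum_cong) (use summand in auto)
  have sig: "UNIV - {(0::int, 0::int)} = Sigma UNIV B" by (auto simp: B_def split: if_splits)
  have row: "((\<lambda>n. g (m, n)) has_sum R m) (B m)" for m
  proof (cases "m = 0")
    case True
    have "((\<lambda>n::int. t ^ 3 * (1 / (real_of_int n) ^ 6)) has_sum (t ^ 3 * c0)) (- {0})"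
      unfolding c0_def by (rule has_sum_cmult_right) (use row_zero in \<open>simp add: has_sum_iff\<close>)
    moreover have "g (0, n) = t ^ 3 * (1 / (real_of_int n) ^ 6)" for n
      by (simp add: g_def flip: power_mult)
    ultimately show ?thesis using True by (simp add: B_def R_def)
  next
    case False
    show ?thesis using row_nz[OF t False, of u] False by (simp add: g_def B_def R_def)
  qed
  have Rnn: "R m \<ge> 0" for m
    using row[of m] gnn by (auto intro: has_sum_nonneg)
  have TTs: "summable (TT u t)" by (rule TT_summable[OF t])
  have Rpos: "R (int (Suc k)) = TT u t k" for k
    by (simp add: R_def TT_def)
  have Rneg: "R (- int k - 1) = TT u t k" for k
  proof -
    have h1: "real_of_int (- int k - 1) * u = - (real (Suc k) * u)" by (simp add: algebra_simps)
    have h2: "\<bar>real_of_int (- int k - 1)\<bar> * t = real (Suc k) * t" by simp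
    have neq: "- int k - 1 \<noteq> 0" by simp
    show ?thesis unfolding R_def if_not_P[OF neq] h1 h2 F3_even TT_def ..
  qed
  have s1: "(\<lambda>k. R (int k)) sums (t ^ 3 * c0 + (\<Sum>k. TT u t k))"
  proof -
    have "(\<lambda>k. R (int (Suc k))) sums (\<Sum>k. TT u t k)" unfolding Rpos using TTs by (rule summable_sums)
    then show ?thesis by (subst (asm) sums_Suc_iff) (simp add: R_def add.commute)
  qed
  have s2: "(\<lambda>k. R (- int k - 1)) sums (\<Sum>k. TT u t k)" unfolding Rneg using TTs by (rule summable_sums)
  have Rsum: "(R has_sum (t ^ 3 * c0 + 2 * (\<Sum>k. TT u t k))) UNIV"
    using int_has_sum[OF Rnn s1 s2] by (simp add: algebra_simps)
  have rowinf: "infsum (\<lambda>n. g (m, n)) (B m) = R m" for m using row[of m] by (simp add: has_sum_iff)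
  have abs: "(\<lambda>p. norm (g p)) summable_on Sigma UNIV B"
  proof (subst Infinite_Sum.abs_summable_on_Sigma_iff, intro conjI ballI)
    show "(\<lambda>n. norm (g (m, n))) summable_on B m" for m
      using row[of m] gnn by (simp add: has_sum_iff)
    have "(\<lambda>m. infsum (\<lambda>n. norm (g (m, n))) (B m)) = R" using rowinf gnn by (simp add: abs_of_nonneg)
    then show "(\<lambda>m. norm (infsum (\<lambda>n. norm (g (m, n))) (B m))) summable_on UNIV"
    proof -
      have "(\<lambda>m. norm (infsum (\<lambda>n. norm (g (m, n))) (B m))) = R"
        unfolding \<open>(\<lambda>m. infsum (\<lambda>n. norm (g (m, n))) (B m)) = R\<close>[symmetric] using Rnn rowinf gnn
        by (auto simp: abs_of_nonneg)
      then show ?thesis using Rsum by (simp add: has_sum_iff)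
    qed
  qed
  have gs: "g summable_on Sigma UNIV B" by (rule abs_summable_summable[OF abs])
  have "infsum g (Sigma UNIV B) = infsum (\<lambda>m. infsum (\<lambda>n. g (m, n)) (B m)) UNIV"
    by (rule infsum_Sigma_banach[symmetric]) (rule gs)
  also have "\<dots> = infsum R UNIV" using rowinf by simp
  also have "\<dots> = t ^ 3 * c0 + 2 * (\<Sum>k. TT u t k)" using Rsum by (simp add: has_sum_iff)
  finally show ?thesis using e1 sig by simp
qed

definition Cc :: "nat \<Rightarrow> nat \<Rightarrow> real" where "Cc k j = 2 * pi * real j * real (Suc k)"

definition ff :: "nat \<Rightarrow> nat \<Rightarrow> real \<Rightarrow> real \<Rightarrow> real" where
  "ff k j u t = wt j * pi / (4 * real (Suc k) ^ 5) * cos (Cc k j * u) *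
     (exp (- (Cc k j * t)) * ((Cc k j)\<^sup>2 + 3 * Cc k j / t + 3 / t\<^sup>2))"
definition fu :: "nat \<Rightarrow> nat \<Rightarrow> real \<Rightarrow> real \<Rightarrow> real" where
  "fu k j u t = - (wt j * pi / (4 * real (Suc k) ^ 5)) * (Cc k j * sin (Cc k j * u)) *
     (exp (- (Cc k j * t)) * ((Cc k j)\<^sup>2 + 3 * Cc k j / t + 3 / t\<^sup>2))"
definition ftu :: "nat \<Rightarrow> nat \<Rightarrow> real \<Rightarrow> real \<Rightarrow> real" where
  "ftu k j u t = (wt j * pi / (4 * real (Suc k) ^ 5)) * (Cc k j * sin (Cc k j * u)) *
     (exp (- (Cc k j * t)) * ((Cc k j) ^ 3 + 3 * (Cc k j)\<^sup>2 / t + 6 * Cc k j / t\<^sup>2 + 6 / t ^ 3))"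

lemma ff_eq:
  assumes t: "t > 0"
  shows "2 * t ^ 3 * F3 (real (Suc k) * u) j (real (Suc k) * t) = ff k j u t"
proof -
  define m where "m = real (Suc k)"
  have m: "m > 0" by (simp add: m_def)
  have c1: "2 * pi * real j * (m * u) = Cc k j * u" by (simp add: Cc_def m_def)
  have c2: "2 * pi * real j * (m * t) = Cc k j * t" by (simp add: Cc_def m_def)
  show ?thesis unfolding F3_def ff_def m_def[symmetric] c1 c2
    using t m by (simp add: field_simps eval_nat_numeral)
qed

lemma E_dt:
  assumes t: "t > 0"
  shows "((\<lambda>t. exp (- (c * t)) * (c\<^sup>2 + 3 * c / t + 3 / t\<^sup>2)) has_real_derivative
     (- (exp (- (c * t)) * (c ^ 3 + 3 * c\<^sup>2 / t + 6 * c / t\<^sup>2 + 6 / t ^ 3)))) (at t)"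
proof -
  have "((\<lambda>t. exp (- (c * t)) * (c\<^sup>2 + 3 * c / t + 3 / t\<^sup>2)) has_real_derivative
     (exp (- (c * t)) * (- c) * (c\<^sup>2 + 3 * c / t + 3 / t\<^sup>2) + exp (- (c * t)) * (- (3 * c) / t\<^sup>2 - 6 / t ^ 3))) (at t)"
    using t by (auto intro!: derivative_eq_intros simp: field_simps eval_nat_numeral)
  then show ?thesis
    by (rule DERIV_cong) (use t in \<open>simp add: field_simps eval_nat_numeral\<close>)
qed

lemma ff_du: "((\<lambda>u. ff k j u t) has_real_derivative fu k j u t) (at u)"
proof -
  define A where "A = wt j * pi / (4 * real (Suc k) ^ 5)"
  define E where "E = exp (- (Cc k j * t)) * ((Cc k j)\<^sup>2 + 3 * Cc k j / t + 3 / t\<^sup>2)"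
  have "((\<lambda>u. cos (Cc k j * u)) has_real_derivative (- sin (Cc k j * u) * Cc k j)) (at u)"
    by (auto intro!: derivative_eq_intros)
  from DERIV_cmult_right[OF DERIV_cmult[OF this, of A], of E]
  show ?thesis unfolding ff_def fu_def A_def[symmetric] E_def[symmetric] by (simp add: algebra_simps)
qed

lemma fu_dt:
  assumes "t > 0"
  shows "((\<lambda>t. fu k j u t) has_real_derivative ftu k j u t) (at t)"
proof -
  define A where "A = - (wt j * pi / (4 * real (Suc k) ^ 5)) * (Cc k j * sin (Cc k j * u))"
  from DERIV_cmult[OF E_dt[OF assms, of "Cc k j"], of A]
  show ?thesis unfolding fu_def ftu_def A_def[symmetric] by (simp add: A_def algebra_simps)
qed

lemma series_deriv2:
  fixes f f' :: "nat \<Rightarrow> nat \<Rightarrow> real \<Rightarrow> real" and M :: "nat \<Rightarrow> nat \<Rightarrow> real"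
  assumes d: "\<And>k j t. t \<in> {l<..<r} \<Longrightarrow> (f k j has_real_derivative f' k j t) (at t)"
    and b: "\<And>k j t. t \<in> {l<..<r} \<Longrightarrow> \<bar>f' k j t\<bar> \<le> M k j"
    and M1: "\<And>k. summable (M k)" and M2: "summable (\<lambda>k. \<Sum>j. M k j)"
    and t0: "t0 \<in> {l<..<r}" and s1: "\<And>k. summable (\<lambda>j. f k j t0)" and s2: "summable (\<lambda>k. \<Sum>j. f k j t0)"
    and t: "t \<in> {l<..<r}"
  shows "((\<lambda>t. \<Sum>k. \<Sum>j. f k j t) has_real_derivative (\<Sum>k. \<Sum>j. f' k j t)) (at t)"
    and "summable (\<lambda>j. f' k j t)" and "summable (\<lambda>k. \<Sum>j. f' k j t)"
proof -
  have inner: "((\<lambda>t. \<Sum>j. f k j t) has_real_derivative (\<Sum>j. f' k j t')) (at t')" if "t' \<in> {l<..<r}" for k t'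
    using series_deriv(2)[OF d b M1 t0 s1 that] .
  have fs: "summable (\<lambda>j. f' k j t')" if "t' \<in> {l<..<r}" for k t'
    by (rule series_deriv_summable'[of _ _ "M k"]) (use b that M1 in auto)
  have ib: "\<bar>\<Sum>j. f' k j t'\<bar> \<le> (\<Sum>j. M k j)" if "t' \<in> {l<..<r}" for k t'
  proof -
    have "(\<Sum>j. f' k j t') \<le> (\<Sum>j. M k j)"
    proof (rule suminf_le[OF _ fs[OF that] M1])
      fix j show "f' k j t' \<le> M k j" using b[OF that, of k j] by (simp add: abs_le_iff)
    qed
    moreover have "(\<Sum>j. - M k j) \<le> (\<Sum>j. f' k j t')"
    proof (rule suminf_le[OF _ summable_minus[OF M1] fs[OF that]])
      fix j show "- M k j \<le> f' k j t'" using b[OF that, of k j] by (simp add: abs_le_iff)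
    qed
    then have "- (\<Sum>j. M k j) \<le> (\<Sum>j. f' k j t')" using suminf_minus[OF M1[of k]] by simp
    ultimately show ?thesis by (simp add: abs_le_iff)
  qed
  note O = series_deriv[where f = "\<lambda>k t. \<Sum>j. f k j t" and f' = "\<lambda>k t. \<Sum>j. f' k j t", OF inner ib M2 t0 s2 t]
  show "((\<lambda>t. \<Sum>k. \<Sum>j. f k j t) has_real_derivative (\<Sum>k. \<Sum>j. f' k j t)) (at t)" by (rule O(2))
  show "summable (\<lambda>j. f' k j t)" by (rule fs[OF t])
  show "summable (\<lambda>k. \<Sum>j. f' k j t)"
    by (rule series_deriv_summable'[of _ _ "\<lambda>k. \<Sum>j. M k j"]) (use ib t M2 in auto)
qed

lemma pe:
  fixes C :: real
  assumes "C \<ge> 0"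
  shows "C ^ p * exp (- (C / 2)) \<le> (4 * real p) ^ p * exp (- (C / 4))"
proof -
  have "C ^ p \<le> (real p / (1/4)) ^ p * exp ((1/4) * C)" using pow_le_exp[OF assms, of "1/4" p] by simp
  then have "C ^ p * exp (- (C / 2)) \<le> (real p / (1/4)) ^ p * exp ((1/4) * C) * exp (- (C / 2))"
    by (intro mult_right_mono) auto
  also have "\<dots> = (4 * real p) ^ p * exp (- (C / 4))"
    by (simp add: mult.assoc flip: exp_add)
  finally show ?thesis .
qed

lemma Cc_nonneg: "Cc k j \<ge> 0" by (simp add: Cc_def)

lemma exp_C4:
  assumes "j \<ge> 1"
  shows "exp (- (Cc k j / 4)) \<le> exp (- (pi / 4)) ^ j * exp (- (pi / 4)) ^ k"
proof -
  have jk: "real j + real k \<le> 2 * (real j * real (Suc k))"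
  proof -
    have "1 * real k \<le> real j * real k" using assms by (intro mult_right_mono) auto
    then show ?thesis using assms by (simp add: algebra_simps)
  qed
  have "pi / 4 * (real j + real k) \<le> Cc k j / 4"
  proof -
    have "pi / 4 * (real j + real k) \<le> pi / 4 * (2 * (real j * real (Suc k)))"
      using jk by (intro mult_left_mono) auto
    also have "\<dots> = Cc k j / 4" by (simp add: Cc_def)
    finally show ?thesis .
  qed
  then have "exp (- (Cc k j / 4)) \<le> exp (- (pi / 4 * (real j + real k)))" by simp
  also have "\<dots> = exp (- (pi / 4)) ^ j * exp (- (pi / 4)) ^ k"
  proof -
    have "exp (- (pi / 4)) ^ j * exp (- (pi / 4)) ^ k = exp (real j * (- (pi / 4))) * exp (real k * (- (pi / 4)))"
      by (simp only: exp_of_nat_mult)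
    also have "\<dots> = exp (real j * (- (pi / 4)) + real k * (- (pi / 4)))" by (simp only: exp_add)
    also have "real j * (- (pi / 4)) + real k * (- (pi / 4)) = - (pi / 4 * (real j + real k))" by (simp add: algebra_simps)
    finally show ?thesis by simp
  qed
  finally show ?thesis .
qed

lemma wtA: "0 \<le> wt j * pi / (4 * real (Suc k) ^ 5)" "wt j * pi / (4 * real (Suc k) ^ 5) \<le> pi / 2"
proof -
  show "0 \<le> wt j * pi / (4 * real (Suc k) ^ 5)" by (simp add: wt_def)
  have "1 \<le> real (Suc k) ^ 5" by simp
  then have "wt j * pi / (4 * real (Suc k) ^ 5) \<le> wt j * pi / 4"
    by (intro divide_left_mono) (auto simp: wt_def)
  also have "\<dots> \<le> pi / 2" by (simp add: wt_def)
  finally show "wt j * pi / (4 * real (Suc k) ^ 5) \<le> pi / 2" .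
qed

lemma fu_bound:
  assumes t: "t > 1/2"
  shows "\<bar>fu k j u t\<bar> \<le> (pi / 2 * 2160) * (exp (- (pi / 4)) ^ j * exp (- (pi / 4)) ^ k)"
proof (cases "j = 0")
  case True then show ?thesis by (simp add: fu_def Cc_def)
next
  case False
  define C where "C = Cc k j"
  define A where "A = wt j * pi / (4 * real (Suc k) ^ 5)"
  have C0: "C \<ge> 0" by (simp add: C_def Cc_nonneg)
  have A: "0 \<le> A" "A \<le> pi / 2" using wtA by (auto simp: A_def)
  have t0: "t > 0" using t by simp
  have it: "1 / t \<le> 2" using t by (simp add: field_simps)
  have it2: "1 / t\<^sup>2 \<le> 4"
  proof -
    have "1 / t\<^sup>2 = (1 / t)\<^sup>2" by (simp add: power_divide)
    also have "\<dots> \<le> 2\<^sup>2" using it t0 by (intro power_mono) auto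
    finally show ?thesis by simp
  qed
  have E: "C\<^sup>2 + 3 * C / t + 3 / t\<^sup>2 \<le> C\<^sup>2 + 6 * C + 12"
  proof -
    have "3 * C / t = 3 * C * (1 / t)" by simp
    also have "\<dots> \<le> 3 * C * 2" using it C0 by (intro mult_left_mono) auto
    finally have a: "3 * C / t \<le> 6 * C" by simp
    have "3 / t\<^sup>2 = 3 * (1 / t\<^sup>2)" by simp
    also have "\<dots> \<le> 3 * 4" using it2 by (intro mult_left_mono) auto
    finally have b: "3 / t\<^sup>2 \<le> 12" by simp
    show ?thesis using a b by simp
  qed
  have Epos: "0 \<le> C\<^sup>2 + 3 * C / t + 3 / t\<^sup>2" using C0 t0 by simp
  have ex: "exp (- (C * t)) \<le> exp (- (C / 2))"
  proof -
    have "C * (1/2) \<le> C * t" using C0 t by (intro mult_left_mono) auto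
    then show ?thesis by simp
  qed
  have "\<bar>fu k j u t\<bar> = A * (C * \<bar>sin (C * u)\<bar>) * (exp (- (C * t)) * (C\<^sup>2 + 3 * C / t + 3 / t\<^sup>2))"
    unfolding fu_def C_def[symmetric] A_def[symmetric] using A C0 Epos by (simp add: abs_mult)
  also have "\<dots> \<le> (pi / 2) * (C * 1) * (exp (- (C / 2)) * (C\<^sup>2 + 6 * C + 12))"
    using A C0 Epos E ex by (intro mult_mono) auto
  also have "\<dots> = (pi / 2) * (C ^ 3 * exp (- (C / 2)) + 6 * (C ^ 2 * exp (- (C / 2))) + 12 * (C ^ 1 * exp (- (C / 2))))"
    by (simp add: algebra_simps eval_nat_numeral)
  also have "\<dots> \<le> (pi / 2) * ((4 * real 3) ^ 3 * exp (- (C / 4)) + 6 * ((4 * real 2) ^ 2 * exp (- (C / 4))) + 12 * ((4 * real 1) ^ 1 * exp (- (C / 4))))"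
    using pe[OF C0, of 3] pe[OF C0, of 2] pe[OF C0, of 1] by (intro mult_left_mono add_mono) auto
  also have "\<dots> = (pi / 2 * 2160) * exp (- (C / 4))" by simp
  also have "\<dots> \<le> (pi / 2 * 2160) * (exp (- (pi / 4)) ^ j * exp (- (pi / 4)) ^ k)"
    using exp_C4[of j k] False unfolding C_def by (intro mult_left_mono) auto
  finally show ?thesis .
qed

lemma ftu_bound:
  assumes t: "t > 1/2"
  shows "\<bar>ftu k j u t\<bar> \<le> (pi / 2 * 77632) * (exp (- (pi / 4)) ^ j * exp (- (pi / 4)) ^ k)"
proof (cases "j = 0")
  case True then show ?thesis by (simp add: ftu_def Cc_def)
next
  case False
  define C where "C = Cc k j"
  define A where "A = wt j * pi / (4 * real (Suc k) ^ 5)"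
  have C0: "C \<ge> 0" by (simp add: C_def Cc_nonneg)
  have A: "0 \<le> A" "A \<le> pi / 2" using wtA by (auto simp: A_def)
  have t0: "t > 0" using t by simp
  have it: "1 / t \<le> 2" using t by (simp add: field_simps)
  have it2: "1 / t\<^sup>2 \<le> 4"
  proof -
    have "1 / t\<^sup>2 = (1 / t)\<^sup>2" by (simp add: power_divide)
    also have "\<dots> \<le> 2\<^sup>2" using it t0 by (intro power_mono) auto
    finally show ?thesis by simp
  qed
  have it3: "1 / t ^ 3 \<le> 8"
  proof -
    have "1 / t ^ 3 = (1 / t) ^ 3" by (simp add: power_divide)
    also have "\<dots> \<le> 2 ^ 3" using it t0 by (intro power_mono) auto
    finally show ?thesis by simp
  qed
  have E: "C ^ 3 + 3 * C\<^sup>2 / t + 6 * C / t\<^sup>2 + 6 / t ^ 3 \<le> C ^ 3 + 6 * C\<^sup>2 + 24 * C + 48"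
  proof -
    have "3 * C\<^sup>2 / t = 3 * C\<^sup>2 * (1 / t)" by simp
    also have "\<dots> \<le> 3 * C\<^sup>2 * 2" using it C0 by (intro mult_left_mono) auto
    finally have a: "3 * C\<^sup>2 / t \<le> 6 * C\<^sup>2" by simp
    have "6 * C / t\<^sup>2 = 6 * C * (1 / t\<^sup>2)" by simp
    also have "\<dots> \<le> 6 * C * 4" using it2 C0 by (intro mult_left_mono) auto
    finally have b: "6 * C / t\<^sup>2 \<le> 24 * C" by simp
    have "6 / t ^ 3 = 6 * (1 / t ^ 3)" by simp
    also have "\<dots> \<le> 6 * 8" using it3 by (intro mult_left_mono) auto
    finally have c: "6 / t ^ 3 \<le> 48" by simp
    show ?thesis using a b c by simp
  qed
  have Epos: "0 \<le> C ^ 3 + 3 * C\<^sup>2 / t + 6 * C / t\<^sup>2 + 6 / t ^ 3" using C0 t0 by simp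
  have ex: "exp (- (C * t)) \<le> exp (- (C / 2))"
  proof -
    have "C * (1/2) \<le> C * t" using C0 t by (intro mult_left_mono) auto
    then show ?thesis by simp
  qed
  have "\<bar>ftu k j u t\<bar> = A * (C * \<bar>sin (C * u)\<bar>) * (exp (- (C * t)) * (C ^ 3 + 3 * C\<^sup>2 / t + 6 * C / t\<^sup>2 + 6 / t ^ 3))"
    unfolding ftu_def C_def[symmetric] A_def[symmetric] using A C0 Epos by (simp add: abs_mult)
  also have "\<dots> \<le> (pi / 2) * (C * 1) * (exp (- (C / 2)) * (C ^ 3 + 6 * C\<^sup>2 + 24 * C + 48))"
    using A C0 Epos E ex by (intro mult_mono) auto
  also have "\<dots> = (pi / 2) * (C ^ 4 * exp (- (C / 2)) + 6 * (C ^ 3 * exp (- (C / 2))) + 24 * (C ^ 2 * exp (- (C / 2))) + 48 * (C ^ 1 * exp (- (C / 2))))"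
    by (simp add: algebra_simps eval_nat_numeral)
  also have "\<dots> \<le> (pi / 2) * ((4 * real 4) ^ 4 * exp (- (C / 4)) + 6 * ((4 * real 3) ^ 3 * exp (- (C / 4))) + 24 * ((4 * real 2) ^ 2 * exp (- (C / 4))) + 48 * ((4 * real 1) ^ 1 * exp (- (C / 4))))"
    using pe[OF C0, of 4] pe[OF C0, of 3] pe[OF C0, of 2] pe[OF C0, of 1] by (intro mult_left_mono add_mono) auto
  also have "\<dots> = (pi / 2 * 77632) * exp (- (C / 4))" by simp
  also have "\<dots> \<le> (pi / 2 * 77632) * (exp (- (pi / 4)) ^ j * exp (- (pi / 4)) ^ k)"
    using exp_C4[of j k] False unfolding C_def by (intro mult_left_mono) auto
  finally show ?thesis .
qed

lemma maj_summable:
  fixes K :: real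
  defines "\<rho> \<equiv> exp (- (pi / 4))"
  shows "summable (\<lambda>j. K * (\<rho> ^ j * \<rho> ^ k))" "summable (\<lambda>k. \<Sum>j. K * (\<rho> ^ j * \<rho> ^ k))"
proof -
  have r: "0 < \<rho>" "\<rho> < 1" unfolding \<rho>_def by auto
  have g: "summable (\<lambda>j. \<rho> ^ j)" using r by (intro summable_geometric) auto
  have e: "(\<lambda>j. K * (\<rho> ^ j * \<rho> ^ k)) = (\<lambda>j. (K * \<rho> ^ k) * \<rho> ^ j)" for k by (auto simp: algebra_simps)
  show "summable (\<lambda>j. K * (\<rho> ^ j * \<rho> ^ k))" for k unfolding e by (intro summable_mult g)
  have "(\<Sum>j. K * (\<rho> ^ j * \<rho> ^ k)) = (K * (\<Sum>j. \<rho> ^ j)) * \<rho> ^ k" for k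
    unfolding e suminf_mult[OF g] by simp
  moreover have "summable (\<lambda>k. (K * (\<Sum>j. \<rho> ^ j)) * \<rho> ^ k)" using r by (intro summable_mult summable_geometric) auto
  ultimately show "summable (\<lambda>k. \<Sum>j. K * (\<rho> ^ j * \<rho> ^ k))" by simp
qed

lemma Z_series:
  assumes t: "t > 0"
  shows "epstein_zeta 3 (Complex u t) = t ^ 3 * c0 + (\<Sum>k. \<Sum>j. ff k j u t)"
    and "summable (\<lambda>j. ff k j u t)" and "summable (\<lambda>k. \<Sum>j. ff k j u t)"
proof -
  have inner: "(\<Sum>j. ff k j u t) = 2 * TT u t k" for k
  proof -
    have s: "summable (\<lambda>j. F3 (real (Suc k) * u) j (real (Suc k) * t))" using t by (intro S23(1)) simp
    have "(\<Sum>j. ff k j u t) = (\<Sum>j. (2 * t ^ 3) * F3 (real (Suc k) * u) j (real (Suc k) * t))"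
      using ff_eq[OF t] by simp
    also have "\<dots> = (2 * t ^ 3) * (\<Sum>j. F3 (real (Suc k) * u) j (real (Suc k) * t))" by (rule suminf_mult[OF s])
    finally show ?thesis by (simp add: TT_def)
  qed
  show "summable (\<lambda>j. ff k j u t)"
  proof -
    have s: "summable (\<lambda>j. F3 (real (Suc k) * u) j (real (Suc k) * t))" using t by (intro S23(1)) simp
    have "(\<lambda>j. ff k j u t) = (\<lambda>j. (2 * t ^ 3) * F3 (real (Suc k) * u) j (real (Suc k) * t))"
      using ff_eq[OF t] by auto
    then show ?thesis using summable_mult[OF s, of "2 * t ^ 3"] by simp
  qed
  have TTs: "summable (TT u t)" by (rule TT_summable[OF t])
  show "summable (\<lambda>k. \<Sum>j. ff k j u t)" unfolding inner using summable_mult[OF TTs, of 2] by simp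
  have "(\<Sum>k. \<Sum>j. ff k j u t) = 2 * (\<Sum>k. TT u t k)" unfolding inner by (rule suminf_mult[OF TTs])
  then show "epstein_zeta 3 (Complex u t) = t ^ 3 * c0 + (\<Sum>k. \<Sum>j. ff k j u t)"
    using zeta_decomp[OF t, of u] by simp
qed

lemma du_step:
  assumes t: "t > 1/2"
  shows "((\<lambda>u. epstein_zeta 3 (Complex u t)) has_real_derivative (\<Sum>k. \<Sum>j. fu k j x t)) (at x)"
    and "summable (\<lambda>j. fu k j x t)" and "summable (\<lambda>k. \<Sum>j. fu k j x t)"
proof -
  have t0: "t > 0" using t by simp
  have xI: "x \<in> {x - 1<..<x + 1}" by simp
  have d: "((\<lambda>u. ff k j u t) has_real_derivative fu k j u t) (at u)" if "u \<in> {x - 1<..<x + 1}" for k j u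
    by (rule ff_du)
  have b: "\<bar>fu k j u t\<bar> \<le> (pi / 2 * 2160) * (exp (- (pi / 4)) ^ j * exp (- (pi / 4)) ^ k)" if "u \<in> {x - 1<..<x + 1}" for k j u
    by (rule fu_bound[OF t])
  note G = series_deriv2[where f = "\<lambda>k j u. ff k j u t" and f' = "\<lambda>k j u. fu k j u t"
      and M = "\<lambda>k j. (pi / 2 * 2160) * (exp (- (pi / 4)) ^ j * exp (- (pi / 4)) ^ k)",
      OF d b maj_summable(1) maj_summable(2) xI Z_series(2)[OF t0] Z_series(3)[OF t0] xI]
  have "((\<lambda>u. t ^ 3 * c0 + (\<Sum>k. \<Sum>j. ff k j u t)) has_real_derivative (0 + (\<Sum>k. \<Sum>j. fu k j x t))) (at x)"
    by (intro DERIV_add DERIV_const G(1))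
  then show "((\<lambda>u. epstein_zeta 3 (Complex u t)) has_real_derivative (\<Sum>k. \<Sum>j. fu k j x t)) (at x)"
    using Z_series(1)[OF t0] by simp
  show "summable (\<lambda>j. fu k j x t)" by (rule G(2))
  show "summable (\<lambda>k. \<Sum>j. fu k j x t)" by (rule G(3))
qed

lemma mixed:
  assumes y: "y > 1/2"
  shows "deriv (\<lambda>t. deriv (\<lambda>u. epstein_zeta 3 (Complex u t)) x) y = (\<Sum>k. \<Sum>j. ftu k j x y)"
    and "summable (\<lambda>j. ftu k j x y)" and "summable (\<lambda>k. \<Sum>j. ftu k j x y)"
proof -
  define M where "M k j = (pi / 2 * 77632) * (exp (- (pi / 4)) ^ j * exp (- (pi / 4)) ^ k)" for k j
  have yI: "y \<in> {1/2<..<y + 1}" using y by simp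
  have d: "((\<lambda>t. fu k j x t) has_real_derivative ftu k j x t) (at t)" if "t \<in> {1/2<..<y + 1}" for k j t
    using that by (intro fu_dt) auto
  have b: "\<bar>ftu k j x t\<bar> \<le> M k j" if "t \<in> {1/2<..<y + 1}" for k j t
    using that ftu_bound[of t k j x] by (auto simp: M_def)
  have Ms1: "summable (M k)" for k unfolding M_def by (rule maj_summable(1))
  have Ms2: "summable (\<lambda>k. \<Sum>j. M k j)" unfolding M_def by (rule maj_summable(2))
  note G' = series_deriv2[where f = "\<lambda>k j t. fu k j x t" and f' = "\<lambda>k j t. ftu k j x t" and M = M,
      OF d b Ms1 Ms2 yI du_step(2)[OF y] du_step(3)[OF y] yI]
  have eq: "deriv (\<lambda>u. epstein_zeta 3 (Complex u t)) x = (\<Sum>k. \<Sum>j. fu k j x t)" if "t \<in> {1/2<..}" for t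
    using that by (intro DERIV_imp_deriv du_step(1)) auto
  have "((\<lambda>t. deriv (\<lambda>u. epstein_zeta 3 (Complex u t)) x) has_real_derivative (\<Sum>k. \<Sum>j. ftu k j x y)) (at y)"
    by (rule has_field_derivative_transform_within_open[OF G'(1) open_greaterThan, of "1/2"]) (use y eq in auto)
  then show "deriv (\<lambda>t. deriv (\<lambda>u. epstein_zeta 3 (Complex u t)) x) y = (\<Sum>k. \<Sum>j. ftu k j x y)"
    by (rule DERIV_imp_deriv)
  show "summable (\<lambda>j. ftu k j x y)" by (rule G'(2))
  show "summable (\<lambda>k. \<Sum>j. ftu k j x y)" by (rule G'(3))
qed

lemma sin_mult_bound: "\<bar>sin (real N * \<theta>)\<bar> \<le> real N * \<bar>sin \<theta>\<bar>"
proof (induction N)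
  case 0 then show ?case by simp
next
  case (Suc N)
  have "sin (real (Suc N) * \<theta>) = sin (real N * \<theta>) * cos \<theta> + cos (real N * \<theta>) * sin \<theta>"
    by (simp add: distrib_right sin_add)
  then have "\<bar>sin (real (Suc N) * \<theta>)\<bar> \<le> \<bar>sin (real N * \<theta>)\<bar> * \<bar>cos \<theta>\<bar> + \<bar>cos (real N * \<theta>)\<bar> * \<bar>sin \<theta>\<bar>"
    by (simp add: abs_mult[symmetric] abs_triangle_ineq)
  also have "\<dots> \<le> \<bar>sin (real N * \<theta>)\<bar> * 1 + 1 * \<bar>sin \<theta>\<bar>"
    by (intro add_mono mult_mono) auto
  also have "\<dots> \<le> real N * \<bar>sin \<theta>\<bar> + \<bar>sin \<theta>\<bar>" using Suc.IH by simp
  finally show ?case by (simp add: algebra_simps)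
qed

lemma pow5_le: "j \<ge> 1 \<Longrightarrow> real j ^ 5 \<le> 32 ^ (j - 1)"
proof (induction j rule: nat_induct_at_least)
  case base then show ?case by simp
next
  case (Suc n)
  have "real (Suc n) ^ 5 \<le> (2 * real n) ^ 5" using Suc.hyps by (intro power_mono) auto
  also have "\<dots> = 32 * real n ^ 5" by (simp add: power_mult_distrib)
  also have "\<dots> \<le> 32 * 32 ^ (n - 1)" using Suc.IH by simp
  also have "\<dots> = 32 ^ (Suc n - 1)" using Suc.hyps by (cases n) auto
  finally show ?case .
qed

lemma r_bound:
  assumes y: "sqrt 3 / 2 \<le> y"
  shows "exp (- (2 * pi * y)) \<le> 1 / 80"
proof -
  have s3: "17 / 10 \<le> sqrt 3" by (rule real_le_rsqrt) (simp add: power2_eq_square)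
  have "51 / 10 \<le> 2 * pi * y"
  proof -
    have "3 * (17 / 10) \<le> pi * sqrt 3" using pi_gt3 s3 by (intro mult_mono) auto
    also have "pi * sqrt 3 \<le> 2 * pi * y" using y by (simp add: field_simps)
    finally show ?thesis by simp
  qed
  moreover have "80 \<le> exp (51 / 10 :: real)"
  proof -
    have "(1 + (51/10) / 20 :: real) ^ 20 \<le> exp ((51/10) / 20) ^ 20"
      by (intro power_mono exp_ge_add_one_self) simp
    also have "exp ((51/10) / 20 :: real) ^ 20 = exp (real 20 * ((51/10) / 20))"
      by (rule exp_of_nat_mult[symmetric])
    finally have "(1 + (51/10) / 20 :: real) ^ 20 \<le> exp (51/10)" by simp
    moreover have "(80::real) \<le> (1 + (51/10) / 20) ^ 20"
    proof -
      have a: "(248/100::real) \<le> (1 + (51/10)/20)^4" by (simp add: eval_nat_numeral)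
      have "(80::real) \<le> (248/100)^5" by (simp add: eval_nat_numeral)
      also have "\<dots> \<le> ((1 + (51/10)/20)^4)^5" by (intro power_mono a) simp
      also have "\<dots> = (1 + (51/10)/20)^20" by (simp flip: power_mult)
      finally show ?thesis .
    qed
    ultimately show ?thesis by linarith
  qed
  ultimately have "80 \<le> exp (2 * pi * y)" by (meson exp_le_cancel_iff order_trans)
  then show ?thesis by (simp add: exp_minus field_simps)
qed

lemma term_lb:
  fixes x y :: real
  assumes b0: "0 \<le> sin (2 * pi * x)" and y0: "y > 0" and r1: "exp (- (2 * pi * y)) \<le> 1"
    and r_def: "r = exp (- (2 * pi * y))"
    and P1_def: "P1 = (2 * pi) ^ 3 + 3 * (2 * pi)\<^sup>2 / y + 6 * (2 * pi) / y\<^sup>2 + 6 / y ^ 3"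
    and Q_def: "Q = pi\<^sup>2 * sin (2 * pi * x) * (r * P1)"
  shows "Q * ((if k = 0 \<and> j = 1 then 2 else 0) - (if j = 0 then 0 else (32 * r) ^ (j - 1) * r ^ k)) \<le> ftu k j x y"
proof -
  have r0: "0 < r" "r \<le> 1" using r1 by (auto simp: r_def)
  have P1: "P1 > 0" unfolding P1_def using y0 pi_gt_zero by (intro add_pos_pos mult_pos_pos divide_pos_pos zero_less_power) auto
  have Q0: "Q \<ge> 0" using b0 r0 P1 by (simp add: Q_def)
  show ?thesis
  proof (cases "j = 0")
    case True then show ?thesis by (simp add: ftu_def Cc_def)
  next
    case j: False
    define N where "N = j * Suc k"
    define m where "m = real (Suc k)"
    define C where "C = Cc k j"
    define \<beta> where "\<beta> = sin (2 * pi * x)"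
    have N1: "N \<ge> 1" using j by (simp add: N_def)
    have RN: "real N = real j * m" by (simp add: N_def m_def algebra_simps)
    have CN: "C = 2 * pi * real N" by (simp add: C_def Cc_def RN m_def)
    have m1: "m \<ge> 1" by (simp add: m_def)
    have C0: "C \<ge> 0" by (simp add: CN)
    have A: "wt j * pi / (4 * real (Suc k) ^ 5) = pi / (2 * m ^ 5)" using j by (simp add: wt_def m_def)
    have sinb: "\<bar>sin (C * x)\<bar> \<le> real N * \<beta>"
    proof -
      have e: "C * x = real N * (2 * pi * x)" by (simp add: CN)
      show ?thesis unfolding e using sin_mult_bound[of N "2 * pi * x"] b0 by (simp add: \<beta>_def)
    qed
    define PC where "PC = C ^ 3 + 3 * C\<^sup>2 / y + 6 * C / y\<^sup>2 + 6 / y ^ 3"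
    have PC0: "PC \<ge> 0" using C0 y0 by (simp add: PC_def)
    have Pb: "PC \<le> real N ^ 3 * P1"
    proof -
      have n1: "1 \<le> real N" using N1 by simp
      have n2: "real N ^ 2 \<le> real N ^ 3" "real N \<le> real N ^ 3" "1 \<le> real N ^ 3"
        using n1 by (auto intro: power_increasing[of 1 _ "real N", simplified] power_increasing)
      have a1: "C ^ 3 = real N ^ 3 * (2 * pi) ^ 3" by (simp add: CN power_mult_distrib)
      have a2: "3 * C\<^sup>2 / y = real N ^ 2 * (3 * (2 * pi)\<^sup>2 / y)" by (simp add: CN power_mult_distrib)
      have a3: "6 * C / y\<^sup>2 = real N * (6 * (2 * pi) / y\<^sup>2)" by (simp add: CN)
      have b2: "real N ^ 2 * (3 * (2 * pi)\<^sup>2 / y) \<le> real N ^ 3 * (3 * (2 * pi)\<^sup>2 / y)"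
        using n2 y0 by (intro mult_right_mono) auto
      have b3: "real N * (6 * (2 * pi) / y\<^sup>2) \<le> real N ^ 3 * (6 * (2 * pi) / y\<^sup>2)"
        using n2 y0 by (intro mult_right_mono) auto
      have b4: "6 / y ^ 3 \<le> real N ^ 3 * (6 / y ^ 3)"
        using n2 y0 mult_right_mono[of 1 "real N ^ 3" "6 / y ^ 3"] by simp
      have "PC = real N ^ 3 * (2 * pi) ^ 3 + real N ^ 2 * (3 * (2 * pi)\<^sup>2 / y) + real N * (6 * (2 * pi) / y\<^sup>2) + 6 / y ^ 3"
        unfolding PC_def a1 a2 a3 ..
      also have "\<dots> \<le> real N ^ 3 * (2 * pi) ^ 3 + real N ^ 3 * (3 * (2 * pi)\<^sup>2 / y) + real N ^ 3 * (6 * (2 * pi) / y\<^sup>2) + real N ^ 3 * (6 / y ^ 3)"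
        using b2 b3 b4 by linarith
      also have "\<dots> = real N ^ 3 * P1" by (simp add: P1_def algebra_simps)
      finally show ?thesis .
    qed
    have eb: "exp (- (C * y)) = r ^ N"
    proof -
      have "exp (- (C * y)) = exp (real N * (- (2 * pi * y)))" by (simp add: CN algebra_simps)
      also have "\<dots> = r ^ N" unfolding r_def by (rule exp_of_nat_mult)
      finally show ?thesis .
    qed
    have rN: "r ^ N \<le> r * (r ^ (j - 1) * r ^ k)"
    proof -
      have "j - 1 + k \<le> N - 1"
      proof -
        have "j + k \<le> N" using j by (simp add: N_def)
        then show ?thesis using j by linarith
      qed
      then have "r ^ (N - 1) \<le> r ^ (j - 1 + k)" using r0 by (intro power_decreasing) auto
      moreover have "r ^ N = r * r ^ (N - 1)" using N1 by (metis Suc_diff_1 less_le_trans zero_less_one power_Suc N1 le_eq_less_or_eq)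
      ultimately show ?thesis using r0 by (simp add: power_add mult_left_mono)
    qed
    have j5: "real j ^ 5 \<le> 32 ^ (j - 1)" using j by (intro pow5_le) simp
    have "\<bar>ftu k j x y\<bar> = (pi / (2 * m ^ 5)) * (C * \<bar>sin (C * x)\<bar>) * (r ^ N * PC)"
      unfolding ftu_def A C_def[symmetric] PC_def[symmetric] eb[symmetric] using C0 PC0 m1
      by (simp add: abs_mult)
    also have "\<dots> \<le> (pi / (2 * m ^ 5)) * (C * (real N * \<beta>)) * (r ^ N * (real N ^ 3 * P1))"
      using sinb Pb C0 PC0 r0 m1 by (intro mult_mono mult_left_mono) auto
    also have "\<dots> = pi\<^sup>2 * \<beta> * P1 * real j ^ 5 * r ^ N"
      using m1 by (simp add: CN RN field_simps eval_nat_numeral)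
    also have "\<dots> \<le> pi\<^sup>2 * \<beta> * P1 * 32 ^ (j - 1) * (r * (r ^ (j - 1) * r ^ k))"
      using j5 rN b0 P1 r0 by (intro mult_mono mult_left_mono) (auto simp: \<beta>_def)
    also have "\<dots> = Q * ((32 * r) ^ (j - 1) * r ^ k)"
      by (simp add: Q_def \<beta>_def power_mult_distrib)
    finally have ab: "\<bar>ftu k j x y\<bar> \<le> Q * ((32 * r) ^ (j - 1) * r ^ k)" .
    show ?thesis
    proof (cases "k = 0 \<and> j = 1")
      case True
      have "ftu k j x y = Q"
        using True unfolding ftu_def Q_def P1_def r_def by (simp add: Cc_def wt_def power2_eq_square)
      then show ?thesis using True by simp
    next
      case False
      have e: "Q * ((if k = 0 \<and> j = 1 then 2 else 0) - (if j = 0 then 0 else (32 * r) ^ (j - 1) * r ^ k)) = - (Q * ((32 * r) ^ (j - 1) * r ^ k))"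
        using False j by auto
      have "- (Q * ((32 * r) ^ (j - 1) * r ^ k)) \<le> ftu k j x y" using ab by (simp only: abs_le_iff) linarith
      then show ?thesis unfolding e .
    qed
  qed
qed

lemma final_ineq:
  fixes x y :: real
  assumes x0: "0 \<le> x" and x1: "x \<le> 1/2" and y: "sqrt 3 / 2 \<le> y"
  shows "0 \<le> (\<Sum>k. \<Sum>j. ftu k j x y)"
proof -
  have s3: "17 / 10 \<le> sqrt 3" by (rule real_le_rsqrt) (simp add: power2_eq_square)
  have yh: "y > 1/2" using y s3 by simp
  have y0: "y > 0" using yh by simp
  have b0: "0 \<le> sin (2 * pi * x)" using x0 x1 by (intro sin_ge_zero) auto
  define r where "r = exp (- (2 * pi * y))"
  define P1 where "P1 = (2 * pi) ^ 3 + 3 * (2 * pi)\<^sup>2 / y + 6 * (2 * pi) / y\<^sup>2 + 6 / y ^ 3"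
  define Q where "Q = pi\<^sup>2 * sin (2 * pi * x) * (r * P1)"
  have r0: "0 < r" by (simp add: r_def)
  have r80: "r \<le> 1 / 80" unfolding r_def by (rule r_bound[OF y])
  have r1: "exp (- (2 * pi * y)) \<le> 1" using y0 by simp
  have P1: "P1 > 0" unfolding P1_def using y0 pi_gt_zero by (intro add_pos_pos mult_pos_pos divide_pos_pos zero_less_power) auto
  have Q0: "Q \<ge> 0" using b0 r0 P1 by (simp add: Q_def)
  define L where "L k j = Q * ((if k = 0 \<and> j = 1 then 2 else 0) - (if j = 0 then 0 else (32 * r) ^ (j - 1) * r ^ k))" for k j
  have Lle: "L k j \<le> ftu k j x y" for k j
    unfolding L_def by (rule term_lb[OF b0 y0 r1 r_def P1_def Q_def])
  have q: "norm (32 * r) < 1" using r0 r80 by simp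
  have rowG: "(\<lambda>j. if j = 0 then 0 else (32 * r) ^ (j - 1) * r ^ k) sums (r ^ k / (1 - 32 * r))" for k
  proof -
    have "(\<lambda>j. (32 * r) ^ j * r ^ k) sums (1 / (1 - 32 * r) * r ^ k)"
      by (rule sums_mult2[OF geometric_sums[OF q]])
    then have "(\<lambda>j. (\<lambda>j. if j = 0 then 0 else (32 * r) ^ (j - 1) * r ^ k) (Suc j)) sums (r ^ k / (1 - 32 * r))"
      by simp
    then show ?thesis by (subst (asm) sums_Suc_iff) simp
  qed
  have rowD: "(\<lambda>j. if k = 0 \<and> j = 1 then 2 else 0) sums (if k = 0 then 2 else (0::real))" for k
  proof (cases "k = 0")
    case True
    then show ?thesis using sums_single[of 1 "\<lambda>_. 2::real"] by simp
  next
    case False then show ?thesis by simp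
  qed
  have row: "(\<lambda>j. L k j) sums (Q * ((if k = 0 then 2 else 0) - r ^ k / (1 - 32 * r)))" for k
    unfolding L_def by (intro sums_mult sums_diff rowD rowG)
  have r1': "norm r < 1" using r0 r80 by simp
  have outer: "(\<lambda>k. Q * ((if k = 0 then 2 else 0) - r ^ k / (1 - 32 * r))) sums (Q * (2 - (1 / (1 - r)) / (1 - 32 * r)))"
  proof -
    have a: "(\<lambda>k. if k = 0 then 2 else (0::real)) sums 2" using sums_single[of 0 "\<lambda>_. 2::real"] by simp
    have b: "(\<lambda>k. r ^ k / (1 - 32 * r)) sums ((1 / (1 - r)) / (1 - 32 * r))"
      by (rule sums_divide[OF geometric_sums[OF r1']])
    show ?thesis by (intro sums_mult sums_diff a b)
  qed
  have inner_le: "(\<Sum>j. L k j) \<le> (\<Sum>j. ftu k j x y)" for k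
    by (rule suminf_le[OF Lle sums_summable[OF row] mixed(2)[OF yh]])
  have "(\<Sum>k. \<Sum>j. L k j) \<le> (\<Sum>k. \<Sum>j. ftu k j x y)"
  proof (rule suminf_le[OF inner_le _ mixed(3)[OF yh]])
    show "summable (\<lambda>k. \<Sum>j. L k j)" using sums_summable[OF outer] row by (simp add: sums_iff)
  qed
  moreover have "(\<Sum>k. \<Sum>j. L k j) = Q * (2 - (1 / (1 - r)) / (1 - 32 * r))"
  proof -
    have "(\<lambda>k. \<Sum>j. L k j) = (\<lambda>k. Q * ((if k = 0 then 2 else 0) - r ^ k / (1 - 32 * r)))"
      using row by (simp add: sums_iff)
    then show ?thesis using outer by (simp add: sums_iff)
  qed
  moreover have "0 \<le> Q * (2 - (1 / (1 - r)) / (1 - 32 * r))"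
  proof -
    have "1 / 2 \<le> (1 - r) * (1 - 32 * r)"
    proof -
      have "(79/80) * (1 - 32 * (1/80)) \<le> (1 - r) * (1 - 32 * r)"
        using r80 r0 by (intro mult_mono) auto
      then show ?thesis by simp
    qed
    then have "(1 / (1 - r)) / (1 - 32 * r) \<le> 2" using r80 by (simp add: field_simps)
    then show ?thesis using Q0 by simp
  qed
  ultimately show ?thesis by linarith
qed

theorem lemma4p23:
  fixes x y :: real
  assumes "0 \<le> x" and "x \<le> 1/2" and "sqrt 3 / 2 \<le> y"
  shows "deriv (\<lambda>t. deriv (\<lambda>u. epstein_zeta 3 (Complex u t)) x) y \<ge> 0"
proof -
  have s3: "17 / 10 \<le> sqrt 3" by (rule real_le_rsqrt) (simp add: power2_eq_square)
  have yh: "y > 1/2" using assms(3) s3 by simp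
  show ?thesis unfolding mixed(1)[OF yh] using final_ineq[OF assms] by simp
qed

end
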